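(* Let $(\Omega,\mathcal{F},(\mathbb{F}_n)_{n\in\mathbb{N}_0},\mathbb{P})$ be a filtered probability space. For every $n\in\mathbb{N}$ let $\gamma_n\colon\Omega\to[0,\infty)$ be $\mathbb{F}_{n-1}$-measurable, and assume that for every $\omega\in\Omega$: $\limsup_{n\to\infty}\gamma_n(\omega)=0$, $\sum_{n=1}^\infty\gamma_n(\omega)=\infty$, and $\gamma_{n+1}(\omega)\le\gamma_n(\omega)$ for all $n\in\mathbb{N}$. Let $d\in\mathbb{N}$, let $g\colon\mathbb{R}^d\to\mathbb{R}^d$ be measurable and locally bounded, and let $c\in(0,\infty)$ satisfy $\langle\theta,g(\theta)\rangle\le -c\|\theta\|^2$ for all $\theta\in\mathbb{R}^d$. Let $D\colon\mathbb{N}\times\Omega\to\mathbb{R}^d$ be a stochastic process with $\mathbb{E}[\|D_n\|]<\infty$ and $\mathbb{E}[D_n\mid\mathbb{F}_{n-1}]=0$ $\mathbb{P}$-a.s. for all $n\in\mathbb{N}$. Let $\Theta\colon\mathbb{N}_0\times\Omega\to\mathbb{R}^d$ be an $(\mathbb{F}_n)_{n\in\mathbb{N}_0}$-adapted process such that for all $n\in\mathbb{N}$ $$\Theta_n=\Theta_{n-1}+\gamma_n g(\Theta_{n-1})+\gamma_n D_n.$$ For every $R\in\mathbb{R}$ let $\tau_R=\inf(\{n\in\mathbb{N}_0\colon\|\Theta_n\|^2\ge R\}\cup\{\infty\})$, and assume that $\mathbb{E}[\sup_{n\le\tau_R}\|D_n\|^2]<\infty$ for all $R\in\mathbb{R}$.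 For every $t\in[0,\infty)$ let $N_t=\inf\{n\in\mathbb{N}_0\colon\sum_{m=1}^n\gamma_m\ge t\}$, and let $\mathcal{E}=\{\sup_{n\in\mathbb{N}}\|\Theta_n\|<\infty\}$. Then (i) for all $\delta\in(0,\infty)$: $\limsup_{n\to\infty}\mathbb{E}\big[\min\{1,\|\Theta_{N_{n\delta}}\|\mathbb{1}_{\mathcal{E}}\}\big]=0$; (ii) for all $\delta\in(0,\infty)$: $\limsup_{n\to\infty}\mathbb{E}\big[\min\{1,(\max_{N_{n\delta}\le m\le N_{(n+1)\delta}}\|\Theta_m\|)\mathbb{1}_{\mathcal{E}}\}\big]=0$; (iii) $\limsup_{t\to\infty}\mathbb{E}\big[\min\{1,\|\Theta_{N_t}\|\mathbb{1}_{\mathcal{E}}\}\big]=0$.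
   Context: $\langle\cdot,\cdot\rangle$ and $\|\cdot\|$ denote the Euclidean inner product and norm; $\mathbb{1}_{\mathcal{E}}$ is the indicator function of $\mathcal{E}$. *)

theory Defs
  imports "HOL-Probability.Probability"
begin

text \<open>First entrance time tau_R = inf ({n in N0 : norm (Theta n) ^ 2 >= R} union {infinity}),
  as an extended natural number (Inf of the empty set of enat is infinity).\<close>
definition entrance_time :: "(nat \<Rightarrow> 'a \<Rightarrow> 'b::real_normed_vector) \<Rightarrow> real \<Rightarrow> 'a \<Rightarrow> enat" where
  "entrance_time \<Theta> R \<omega> = (INF n\<in>{n. norm (\<Theta> n \<omega>) ^ 2 \<ge> R}. enat n)"

definition time_index :: "(nat \<Rightarrow> 'a \<Rightarrow> real) \<Rightarrow> real \<Rightarrow> 'a \<Rightarrow> nat" where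
  "time_index \<gamma> t \<omega> = (LEAST n. (\<Sum>m=1..n. \<gamma> m \<omega>) \<ge> t)"

definition locally_bounded :: "('a::metric_space \<Rightarrow> 'b::real_normed_vector) \<Rightarrow> bool" where
  "locally_bounded g \<longleftrightarrow> (\<forall>x. \<exists>e>0. bounded (g ` ball x e))"

end

theory Submission
  imports Defs
begin
lemma e1:
  fixes u v w :: "'a::real_inner"
  shows "norm (u + s *\<^sub>R v + s *\<^sub>R w) ^ 2 = norm u ^ 2 + 2 * s * inner u v + 2 * s * inner u w + s^2 * norm (v + w) ^ 2"
    unfolding power2_norm_eq_inner by (simp add: inner_add_left inner_add_right inner_commute[of w u] inner_commute[of v u] inner_commute[of w v] algebra_simps power2_eq_square)

lemma e2:
  fixes u v w :: "'a::real_inner"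
  assumes v: "norm v \<le> G" and w: "norm w ^ 2 \<le> K"
  shows "norm (v + w) ^ 2 \<le> 2 * G^2 + 2 * K"
proof -
  have "norm (v + w) \<le> norm v + norm w" by (rule norm_triangle_ineq)
  hence "norm (v + w) ^ 2 \<le> (norm v + norm w)^2" by (simp add: power_mono)
  also have "\<dots> \<le> 2 * norm v ^ 2 + 2 * norm w ^ 2"
  proof -
    have "(norm v + norm w)^2 + (norm v - norm w)^2 = 2*norm v^2 + 2*norm w^2"
      unfolding power2_sum power2_diff by simp
    moreover have "0 \<le> (norm v - norm w)^2" by simp
    ultimately show ?thesis by linarith
  qed
  also have "\<dots> \<le> 2 * G^2 + 2 * K"
  proof -
    have "norm v ^ 2 \<le> G ^ 2" using v by (simp add: power_mono)
    thus ?thesis using w by linarith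
  qed
  finally show ?thesis .
qed

lemma step_ineq:
  fixes u v w :: "'a::real_inner"
  assumes uv: "inner u v \<le> - c * norm u ^ 2" and v: "norm v \<le> G" and w: "norm w ^ 2 \<le> K"
    and s: "s \<ge> 0"
  shows "norm (u + s *\<^sub>R v + s *\<^sub>R w) ^ 2 \<le> (1 - 2 * c * s) * norm u ^ 2 + 2 * (s * inner u w) + 2 * s^2 * (G^2 + K)"
proof -
  have vw: "norm (v + w) ^ 2 \<le> 2 * G^2 + 2 * K" by (rule e2[OF v w])
  have a: "s^2 * norm (v + w) ^ 2 \<le> s^2 * (2 * G^2 + 2 * K)"
    by (rule mult_left_mono[OF vw]) simp
  have b: "s * inner u v \<le> s * (- c * norm u ^ 2)"
    using uv s by (rule mult_left_mono)
  have c1: "(1 - 2 * c * s) * norm u ^ 2 = norm u ^ 2 - 2 * (s * (c * norm u ^ 2))" by (simp add: algebra_simps)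
  have c2: "s^2 * (2 * G^2 + 2 * K) = 2 * s^2 * (G^2 + K)" by (simp add: algebra_simps)
  show ?thesis unfolding e1 c1 c2[symmetric] using a b by simp
qed

lemma lyap:
  fixes x \<gamma> \<Delta> e :: "nat \<Rightarrow> real"
  assumes step: "\<And>j. k < j \<Longrightarrow> j \<le> m \<Longrightarrow> x j \<le> (1 - 2*c*\<gamma> j) * x (j-1) + 2 * \<Delta> j + e j"
    and gam: "\<And>j. k < j \<Longrightarrow> j \<le> m \<Longrightarrow> 0 \<le> \<gamma> j \<and> 2*c*\<gamma> j \<le> 1"
    and xpos: "\<And>j. 0 \<le> x j"
    and P: "\<And>j. k \<le> j \<Longrightarrow> j \<le> m \<Longrightarrow> \<bar>\<Sum>i\<in>{k<..j}. \<Delta> i\<bar> \<le> \<rho>"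
    and epos: "\<And>j. k < j \<Longrightarrow> j \<le> m \<Longrightarrow> 0 \<le> e j"
    and esum: "(\<Sum>i\<in>{k<..m}. e i) \<le> \<rho>"
    and xk: "x k \<le> R" and km: "k \<le> m" and c: "c > 0"
  shows "x m \<le> R * exp (-2*c*(\<Sum>i\<in>{k<..m}. \<gamma> i)) + 5 * \<rho>"
proof -
  define Pj where "Pj j = (\<Sum>i\<in>{k<..j}. \<Delta> i)" for j
  define Ej where "Ej j = (\<Sum>i\<in>{k<..j}. e i)" for j
  define Gj where "Gj j = (\<Sum>i\<in>{k<..j}. \<gamma> i)" for j
  have rho: "0 \<le> \<rho>" using P[of k] km by simp
  have R0: "0 \<le> R" using xk xpos[of k] by linarith
  have Epos: "k + d \<le> m \<Longrightarrow> 0 \<le> Ej (k + d)" for d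
    unfolding Ej_def by (intro sum_nonneg) (use epos in auto)
  have Emono: "Ej (k+d) \<le> Ej m" if "k + d \<le> m" for d
    unfolding Ej_def by (rule sum_mono2) (use that epos in auto)
  have main: "k + d \<le> m \<Longrightarrow> x (k+d) - 2 * Pj (k+d) - Ej (k+d) - 2*\<rho> \<le> R * exp (-2*c*Gj (k+d))" for d
  proof (induction d)
    case 0
    then show ?case using xk rho by (simp add: Pj_def Ej_def Gj_def)
  next
    case (Suc d)
    let ?j = "Suc (k + d)"
    have IH: "x (k+d) - 2 * Pj (k+d) - Ej (k+d) - 2*\<rho> \<le> R * exp (-2*c*Gj (k+d))"
      using Suc by simp
    have sj: "x ?j \<le> (1 - 2*c*\<gamma> ?j) * x (k+d) + 2 * \<Delta> ?j + e ?j"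
      using step[of ?j] Suc.prems by simp
    have g: "0 \<le> \<gamma> ?j" "2*c*\<gamma> ?j \<le> 1" using gam[of ?j] Suc.prems by auto
    have ins: "{k<..?j} = insert ?j {k<..k+d}" by auto
    have Pj: "Pj ?j = Pj (k+d) + \<Delta> ?j" "Ej ?j = Ej (k+d) + e ?j" "Gj ?j = Gj (k+d) + \<gamma> ?j"
      by (simp_all add: Pj_def Ej_def Gj_def ins)
    define z where "z = x (k+d) - 2 * Pj (k+d) - Ej (k+d) - 2*\<rho>"
    have Pb: "\<bar>Pj (k+d)\<bar> \<le> \<rho>" using P[of "k+d"] Suc.prems by (simp add: Pj_def)
    have xz: "z \<le> x (k+d)" using Pb Epos[of d] Suc.prems unfolding z_def by auto
    have lhs: "x ?j - 2 * Pj ?j - Ej ?j - 2*\<rho> \<le> z - 2*c*\<gamma> ?j * x (k+d)"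
      using sj unfolding Pj z_def by (simp add: algebra_simps)
    have ex: "exp (-2*c*Gj ?j) = exp (-2*c*Gj (k+d)) * exp (-2*c*\<gamma> ?j)"
      unfolding Pj by (simp add: algebra_simps flip: exp_add)
    show ?case
    proof (cases "z \<ge> 0")
      case True
      have "z - 2*c*\<gamma> ?j * x (k+d) \<le> z - 2*c*\<gamma> ?j * z"
        using xz g c by (simp add: mult_left_mono)
      also have "\<dots> = (1 - 2*c*\<gamma> ?j) * z" by (simp add: algebra_simps)
      also have "\<dots> \<le> exp (-2*c*\<gamma> ?j) * z"
        using True by (intro mult_right_mono) (use exp_ge_add_one_self[of "-2*c*\<gamma> ?j"] in auto)
      also have "\<dots> \<le> exp (-2*c*\<gamma> ?j) * (R * exp (-2*c*Gj (k+d)))"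
        using IH unfolding z_def by (intro mult_left_mono) auto
      finally have "z - 2*c*\<gamma> ?j * x (k+d) \<le> R * exp (-2*c*Gj ?j)" unfolding ex by (simp add: algebra_simps)
      thus ?thesis using lhs unfolding add_Suc_right by linarith
    next
      case False
      have "z - 2*c*\<gamma> ?j * x (k+d) \<le> 0"
      proof -
        have "0 \<le> 2*c*\<gamma> ?j * x (k+d)" using g c xpos[of "k+d"] by simp
        thus ?thesis using False by linarith
      qed
      moreover have "0 \<le> R * exp (-2*c*Gj ?j)" using R0 by simp
      ultimately show ?thesis using lhs unfolding add_Suc_right by linarith
    qed
  qed
  obtain d where d: "m = k + d" using km le_Suc_ex by blast
  have "x m - 2 * Pj m - Ej m - 2*\<rho> \<le> R * exp (-2*c*Gj m)" using main[of d] d by simp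
  moreover have "\<bar>Pj m\<bar> \<le> \<rho>" using P[of m] km by (simp add: Pj_def)
  moreover have "Ej m \<le> \<rho>" using esum by (simp add: Ej_def)
  ultimately show ?thesis unfolding Gj_def by linarith
qed

lemma integrable_drop_space:
  fixes f :: "'a \<Rightarrow> real"
  assumes "integrable M (\<lambda>\<omega>. f \<omega> * indicator (space M) \<omega>)"
  shows "integrable M f"
proof -
  have "integrable M f = integrable M (\<lambda>\<omega>. f \<omega> * indicator (space M) \<omega>)"
    by (intro Bochner_Integration.integrable_cong) auto
  thus ?thesis using assms by simp
qed

lemma maximal_ineq:
  fixes X :: "nat \<Rightarrow> 'a \<Rightarrow> real" and lam :: real
  assumes fin: "finite_measure M"
    and Fsub: "\<And>n. subalgebra M (F n)"
    and Fmono: "\<And>n m. n \<le> m \<Longrightarrow> sets (F n) \<subseteq> sets (F m)"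
    and Xmeas: "\<And>i. X i \<in> borel_measurable (F i)"
    and Xint: "\<And>i j. integrable M (\<lambda>\<omega>. X i \<omega> * X j \<omega>)"
    and orth: "\<And>i j A. 1 \<le> i \<Longrightarrow> i < j \<Longrightarrow> A \<in> sets (F (j-1)) \<Longrightarrow> (\<integral>\<omega>. X i \<omega> * X j \<omega> * indicator A \<omega> \<partial>M) = 0"
    and lam: "lam > 0"
  shows "lam^2 * measure M {\<omega>\<in>space M. \<exists>j\<le>L. lam \<le> \<bar>\<Sum>i\<in>{1..j}. X i \<omega>\<bar>} \<le> (\<Sum>i\<in>{1..L}. \<integral>\<omega>. X i \<omega> * X i \<omega> \<partial>M)"
proof -
  interpret finite_measure M by fact
  have spF: "space (F n) = space M" for n using Fsub unfolding subalgebra_def by auto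
  have setsF: "sets (F n) \<subseteq> sets M" for n using Fsub unfolding subalgebra_def by auto
  have measF: "f \<in> borel_measurable (F n)" if "l \<le> n" "f \<in> borel_measurable (F l)" for f :: "'a \<Rightarrow> real" and l n
    by (rule measurable_from_subalg[of "F n" "F l"]) (use that Fmono spF in \<open>auto simp: subalgebra_def\<close>)
  have measM: "f \<in> borel_measurable M" if "f \<in> borel_measurable (F n)" for f :: "'a \<Rightarrow> real" and n
    by (rule measurable_from_subalg[OF Fsub that])
  define S where "S j \<omega> = (\<Sum>i\<in>{1..j}. X i \<omega>)" for j \<omega>
  have SmeasF: "S j \<in> borel_measurable (F n)" if "j \<le> n" for j n
    unfolding S_def by (intro borel_measurable_sum measF[OF _ Xmeas]) (use that in auto)
  have XM[measurable]: "X i \<in> borel_measurable M" for i by (rule measM[OF Xmeas])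
  have SM[measurable]: "S j \<in> borel_measurable M" for j by (rule measM[OF SmeasF[OF order_refl]])
  have int1: "integrable M (\<lambda>\<omega>. S a \<omega> * X j \<omega> * indicator A \<omega>)" if "A \<in> sets M" for a j A
  proof -
    have "(\<lambda>\<omega>. S a \<omega> * X j \<omega> * indicator A \<omega>) = (\<lambda>\<omega>. \<Sum>i\<in>{1..a}. X i \<omega> * X j \<omega> * indicator A \<omega>)"
      unfolding S_def by (simp add: sum_distrib_right)
    moreover have "integrable M (\<lambda>\<omega>. \<Sum>i\<in>{1..a}. X i \<omega> * X j \<omega> * indicator A \<omega>)"
      by (intro Bochner_Integration.integrable_sum) (rule integrable_real_mult_indicator[OF that Xint])
    ultimately show ?thesis by simp
  qed
  have intSS: "integrable M (\<lambda>\<omega>. S a \<omega> * S b \<omega> * indicator A \<omega>)" if "A \<in> sets M" for a b A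
  proof -
    have "(\<lambda>\<omega>. S a \<omega> * S b \<omega> * indicator A \<omega>) = (\<lambda>\<omega>. \<Sum>j\<in>{1..b}. S a \<omega> * X j \<omega> * indicator A \<omega>)"
      unfolding S_def[of b] by (simp add: sum_distrib_left sum_distrib_right)
    moreover have "integrable M (\<lambda>\<omega>. \<Sum>j\<in>{1..b}. S a \<omega> * X j \<omega> * indicator A \<omega>)"
      by (intro Bochner_Integration.integrable_sum int1 that)
    ultimately show ?thesis by simp
  qed
  have orthS: "(\<integral>\<omega>. S k \<omega> * X j \<omega> * indicator A \<omega> \<partial>M) = 0" if "k < j" "A \<in> sets (F (j-1))" for k j A
  proof -
    have "(\<integral>\<omega>. S k \<omega> * X j \<omega> * indicator A \<omega> \<partial>M) = (\<integral>\<omega>. (\<Sum>i\<in>{1..k}. X i \<omega> * X j \<omega> * indicator A \<omega>) \<partial>M)"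
      unfolding S_def by (simp add: sum_distrib_right)
    also have "\<dots> = (\<Sum>i\<in>{1..k}. \<integral>\<omega>. X i \<omega> * X j \<omega> * indicator A \<omega> \<partial>M)"
      by (intro Bochner_Integration.integral_sum integrable_real_mult_indicator[OF _ Xint]) (use that setsF in auto)
    also have "\<dots> = 0" by (intro sum.neutral ballI orth) (use that in auto)
    finally show ?thesis .
  qed
  have energy: "(\<integral>\<omega>. S L' \<omega> * S L' \<omega> \<partial>M) = (\<Sum>i\<in>{1..L'}. \<integral>\<omega>. X i \<omega> * X i \<omega> \<partial>M)" for L'
  proof (induction L')
    case 0
    then show ?case by (simp add: S_def)
  next
    case (Suc L')
    have SS: "S (Suc L') \<omega> = S L' \<omega> + X (Suc L') \<omega>" for \<omega> by (simp add: S_def)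
    have ind: "indicator (space M) \<omega> = (1::real)" if "\<omega> \<in> space M" for \<omega> using that by simp
    have o: "(\<integral>\<omega>. S L' \<omega> * X (Suc L') \<omega> \<partial>M) = 0"
    proof -
      have "(\<integral>\<omega>. S L' \<omega> * X (Suc L') \<omega> \<partial>M) = (\<integral>\<omega>. S L' \<omega> * X (Suc L') \<omega> * indicator (space M) \<omega> \<partial>M)"
        by (intro Bochner_Integration.integral_cong) auto
      also have "\<dots> = 0" by (rule orthS) (use sets.top[of "F L'"] spF[of L'] in auto)
      finally show ?thesis .
    qed
    have i1: "integrable M (\<lambda>\<omega>. S L' \<omega> * S L' \<omega>)"
      by (rule integrable_drop_space, rule intSS) simp
    have i2: "integrable M (\<lambda>\<omega>. S L' \<omega> * X (Suc L') \<omega>)"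
      by (rule integrable_drop_space, rule int1) simp
    have "(\<integral>\<omega>. S (Suc L') \<omega> * S (Suc L') \<omega> \<partial>M)
        = (\<integral>\<omega>. S L' \<omega> * S L' \<omega> + 2 * (S L' \<omega> * X (Suc L') \<omega>) + X (Suc L') \<omega> * X (Suc L') \<omega> \<partial>M)"
      unfolding SS by (simp add: algebra_simps)
    also have "\<dots> = (\<integral>\<omega>. S L' \<omega> * S L' \<omega> \<partial>M) + 2 * (\<integral>\<omega>. S L' \<omega> * X (Suc L') \<omega> \<partial>M) + (\<integral>\<omega>. X (Suc L') \<omega> * X (Suc L') \<omega> \<partial>M)"
      using i1 i2 Xint by simp
    also have "\<dots> = (\<Sum>i\<in>{1..Suc L'}. \<integral>\<omega>. X i \<omega> * X i \<omega> \<partial>M)"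
      unfolding o Suc.IH by simp
    finally show ?case .
  qed
  define A where "A k = {\<omega>\<in>space M. lam \<le> \<bar>S k \<omega>\<bar> \<and> (\<forall>i<k. \<bar>S i \<omega>\<bar> < lam)}" for k
  have AF: "A k \<in> sets (F k)" for k
  proof (cases "k = 0")
    case True
    have "A k = {\<omega>\<in>space (F k). lam \<le> \<bar>S k \<omega>\<bar>}"
      unfolding A_def spF using True by auto
    also have "\<dots> \<in> sets (F k)"
      by (intro borel_measurable_le) (auto intro!: borel_measurable_abs SmeasF)
    finally show ?thesis .
  next
    case False
    have "A k = {\<omega>\<in>space (F k). lam \<le> \<bar>S k \<omega>\<bar>} \<inter> (\<Inter>i\<in>{..<k}. {\<omega>\<in>space (F k). \<bar>S i \<omega>\<bar> < lam})"
      unfolding A_def spF using False by auto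
    also have "\<dots> \<in> sets (F k)"
      by (intro sets.Int sets.countable_INT' borel_measurable_le borel_measurable_less)
        (use False in \<open>auto intro!: borel_measurable_less borel_measurable_abs SmeasF\<close>)
    finally show ?thesis .
  qed
  have AM: "A k \<in> sets M" for k using AF setsF by blast
  have disj: "disjoint_family_on A {..L}"
    unfolding disjoint_family_on_def A_def
    by (auto, metis linorder_neqE_nat not_less)
  have U: "{\<omega>\<in>space M. \<exists>j\<le>L. lam \<le> \<bar>\<Sum>i\<in>{1..j}. X i \<omega>\<bar>} = (\<Union>k\<in>{..L}. A k)"
  proof (intro equalityI subsetI)
    fix \<omega> assume "\<omega> \<in> {\<omega>\<in>space M. \<exists>j\<le>L. lam \<le> \<bar>\<Sum>i\<in>{1..j}. X i \<omega>\<bar>}"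
    then obtain j where j: "\<omega> \<in> space M" "j \<le> L" "lam \<le> \<bar>S j \<omega>\<bar>" unfolding S_def by auto
    define k where "k = (LEAST k. lam \<le> \<bar>S k \<omega>\<bar>)"
    have k1: "lam \<le> \<bar>S k \<omega>\<bar>" unfolding k_def by (rule LeastI[of _ j]) (rule j)
    have k2: "k \<le> j" unfolding k_def by (rule Least_le) (rule j)
    have k3: "\<bar>S i \<omega>\<bar> < lam" if "i < k" for i using not_less_Least[OF that[unfolded k_def]] by simp
    show "\<omega> \<in> (\<Union>k\<in>{..L}. A k)" using j k1 k2 k3 unfolding A_def by auto
  qed (auto simp: A_def S_def)
  have "lam^2 * measure M (\<Union>k\<in>{..L}. A k) = (\<Sum>k\<in>{..L}. lam^2 * measure M (A k))"
    by (subst measure_finite_Union) (use AM disj in \<open>auto simp: sum_distrib_left\<close>)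
  also have "\<dots> \<le> (\<Sum>k\<in>{..L}. \<integral>\<omega>. S L \<omega> * S L \<omega> * indicator (A k) \<omega> \<partial>M)"
  proof (intro sum_mono)
    fix k assume k: "k \<in> {..L}"
    have "lam^2 * measure M (A k) = (\<integral>\<omega>. lam^2 * indicator (A k) \<omega> \<partial>M)"
      using AM by simp
    also have "\<dots> \<le> (\<integral>\<omega>. S k \<omega> * S k \<omega> * indicator (A k) \<omega> \<partial>M)"
    proof (intro Bochner_Integration.integral_mono intSS AM)
      show "integrable M (\<lambda>\<omega>. lam\<^sup>2 * indicator (A k) \<omega>)" using AM[of k] by (simp add: integrable_indicator_iff emeasure_finite less_top[symmetric])
      fix \<omega> assume "\<omega> \<in> space M"
      show "lam\<^sup>2 * indicator (A k) \<omega> \<le> S k \<omega> * S k \<omega> * indicator (A k) \<omega>"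
      proof (cases "\<omega> \<in> A k")
        case True
        hence "lam \<le> \<bar>S k \<omega>\<bar>" unfolding A_def by auto
        hence "lam^2 \<le> \<bar>S k \<omega>\<bar>^2" using lam by (intro power_mono) auto
        thus ?thesis using True by (simp add: power2_eq_square)
      qed simp
    qed
    also have "\<dots> \<le> (\<integral>\<omega>. S L \<omega> * S L \<omega> * indicator (A k) \<omega> \<partial>M)"
    proof -
      define T where "T \<omega> = (\<Sum>i\<in>{k<..L}. X i \<omega>)" for \<omega>
      have ST: "S L \<omega> = S k \<omega> + T \<omega>" for \<omega>
      proof -
        have "{1..L} = {1..k} \<union> {k<..L}" using k by auto
        thus ?thesis unfolding S_def T_def by (simp add: sum.union_disjoint ivl_disj_int)
      qed
      have iT: "integrable M (\<lambda>\<omega>. S k \<omega> * T \<omega> * indicator (A k) \<omega>)"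
      proof -
        have e: "(\<lambda>\<omega>. S k \<omega> * T \<omega> * indicator (A k) \<omega>) = (\<lambda>\<omega>. \<Sum>i\<in>{k<..L}. S k \<omega> * X i \<omega> * indicator (A k) \<omega>)"
          unfolding T_def by (simp add: sum_distrib_left sum_distrib_right)
        show ?thesis unfolding e by (intro Bochner_Integration.integrable_sum int1 AM)
      qed
      have oT: "(\<integral>\<omega>. S k \<omega> * T \<omega> * indicator (A k) \<omega> \<partial>M) = 0"
      proof -
        have "(\<integral>\<omega>. S k \<omega> * T \<omega> * indicator (A k) \<omega> \<partial>M) = (\<integral>\<omega>. (\<Sum>i\<in>{k<..L}. S k \<omega> * X i \<omega> * indicator (A k) \<omega>) \<partial>M)"
          unfolding T_def by (simp add: sum_distrib_left sum_distrib_right)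
        also have "\<dots> = (\<Sum>i\<in>{k<..L}. \<integral>\<omega>. S k \<omega> * X i \<omega> * indicator (A k) \<omega> \<partial>M)"
          by (intro Bochner_Integration.integral_sum int1 AM)
        also have "\<dots> = 0"
        proof (intro sum.neutral ballI)
          fix i assume i: "i \<in> {k<..L}"
          have "A k \<in> sets (F (i - 1))" using AF[of k] Fmono[of k "i-1"] i by force
          thus "(\<integral>\<omega>. S k \<omega> * X i \<omega> * indicator (A k) \<omega> \<partial>M) = 0" using i by (intro orthS) auto
        qed
        finally show ?thesis .
      qed
      have "(\<integral>\<omega>. S k \<omega> * S k \<omega> * indicator (A k) \<omega> \<partial>M)
          = (\<integral>\<omega>. S k \<omega> * S k \<omega> * indicator (A k) \<omega> + 2 * (S k \<omega> * T \<omega> * indicator (A k) \<omega>) \<partial>M)"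
        using intSS[OF AM] iT oT by simp
      also have "\<dots> \<le> (\<integral>\<omega>. S L \<omega> * S L \<omega> * indicator (A k) \<omega> \<partial>M)"
      proof (intro Bochner_Integration.integral_mono intSS AM)
        show "integrable M (\<lambda>\<omega>. S k \<omega> * S k \<omega> * indicator (A k) \<omega> + 2 * (S k \<omega> * T \<omega> * indicator (A k) \<omega>))"
          using intSS[OF AM] iT by simp
        fix \<omega> assume "\<omega> \<in> space M"
        have "0 \<le> T \<omega> * T \<omega> * indicator (A k) \<omega>" by simp
        thus "S k \<omega> * S k \<omega> * indicator (A k) \<omega> + 2 * (S k \<omega> * T \<omega> * indicator (A k) \<omega>) \<le> S L \<omega> * S L \<omega> * indicator (A k) \<omega>"
          unfolding ST by (simp add: algebra_simps)
      qed
      finally show ?thesis .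
    qed
    finally show "lam^2 * measure M (A k) \<le> (\<integral>\<omega>. S L \<omega> * S L \<omega> * indicator (A k) \<omega> \<partial>M)" .
  qed
  also have "\<dots> = (\<integral>\<omega>. (\<Sum>k\<in>{..L}. S L \<omega> * S L \<omega> * indicator (A k) \<omega>) \<partial>M)"
    by (rule Bochner_Integration.integral_sum[symmetric]) (intro intSS AM)
  also have "\<dots> \<le> (\<integral>\<omega>. S L \<omega> * S L \<omega> \<partial>M)"
  proof (intro Bochner_Integration.integral_mono)
    show "integrable M (\<lambda>\<omega>. \<Sum>k\<in>{..L}. S L \<omega> * S L \<omega> * indicator (A k) \<omega>)"
      by (intro Bochner_Integration.integrable_sum intSS AM)
    show "integrable M (\<lambda>\<omega>. S L \<omega> * S L \<omega>)"
      by (rule integrable_drop_space, rule intSS) simp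
    fix \<omega> assume "\<omega> \<in> space M"
    have "(\<Sum>k\<in>{..L}. S L \<omega> * S L \<omega> * indicator (A k) \<omega>) = S L \<omega> * S L \<omega> * indicator (\<Union>k\<in>{..L}. A k) \<omega>"
      by (subst indicator_UN_disjoint[OF _ disj]) (auto simp: sum_distrib_left)
    also have "\<dots> \<le> S L \<omega> * S L \<omega>" by (simp add: indicator_def)
    finally show "(\<Sum>k\<in>{..L}. S L \<omega> * S L \<omega> * indicator (A k) \<omega>) \<le> S L \<omega> * S L \<omega>" .
  qed
  also have "\<dots> = (\<Sum>i\<in>{1..L}. \<integral>\<omega>. X i \<omega> * X i \<omega> \<partial>M)" by (rule energy)
  finally show ?thesis unfolding U .
qed

locale sa =
  fixes M :: "'a measure"
    and F :: "nat \<Rightarrow> 'a measure"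
    and \<gamma> :: "nat \<Rightarrow> 'a \<Rightarrow> real"
    and g :: "real^'d \<Rightarrow> real^'d"
    and c :: real
    and D :: "nat \<Rightarrow> 'a \<Rightarrow> real^'d"
    and \<Theta> :: "nat \<Rightarrow> 'a \<Rightarrow> real^'d"
  assumes prob: "prob_space M"
    and filt_sub: "\<And>n. subalgebra M (F n)"
    and filt_mono: "\<And>n m. n \<le> m \<Longrightarrow> sets (F n) \<subseteq> sets (F m)"
    and gamma_meas: "\<And>n. n \<ge> 1 \<Longrightarrow> \<gamma> n \<in> borel_measurable (F (n - 1))"
    and gamma_nonneg: "\<And>n \<omega>. n \<ge> 1 \<Longrightarrow> \<omega> \<in> space M \<Longrightarrow> \<gamma> n \<omega> \<ge> 0"
    and gamma_limsup: "\<And>\<omega>. \<omega> \<in> space M \<Longrightarrow> limsup (\<lambda>n. ereal (\<gamma> n \<omega>)) = 0"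
    and gamma_sum: "\<And>\<omega>. \<omega> \<in> space M \<Longrightarrow> (\<Sum>n. ennreal (\<gamma> (Suc n) \<omega>)) = \<infinity>"
    and gamma_mono: "\<And>n \<omega>. n \<ge> 1 \<Longrightarrow> \<omega> \<in> space M \<Longrightarrow> \<gamma> (Suc n) \<omega> \<le> \<gamma> n \<omega>"
    and g_meas: "g \<in> borel_measurable borel"
    and g_locbdd: "locally_bounded g"
    and c_pos: "c > 0"
    and g_coercive: "\<And>\<theta>. inner \<theta> (g \<theta>) \<le> - c * norm \<theta> ^ 2"
    and D_int: "\<And>n. n \<ge> 1 \<Longrightarrow> integrable M (D n)"
    and D_mart: "\<And>n i. n \<ge> 1 \<Longrightarrow>
        AE \<omega> in M. real_cond_exp M (F (n - 1)) (\<lambda>x. D n x $ i) \<omega> = 0"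
    and Theta_adapted: "\<And>n. \<Theta> n \<in> borel_measurable (F n)"
    and Theta_rec: "\<And>n \<omega>. n \<ge> 1 \<Longrightarrow> \<omega> \<in> space M \<Longrightarrow>
        \<Theta> n \<omega> = \<Theta> (n - 1) \<omega> + \<gamma> n \<omega> *\<^sub>R g (\<Theta> (n - 1) \<omega>) + \<gamma> n \<omega> *\<^sub>R D n \<omega>"
    and D_sup_int: "\<And>R. (\<integral>\<^sup>+ \<omega>. (SUP n\<in>{n. n \<ge> 1 \<and> enat n \<le> entrance_time \<Theta> R \<omega>}.
        ennreal (norm (D n \<omega>) ^ 2)) \<partial>M) < \<infinity>"
begin

sublocale P: prob_space M by (rule prob)

lemma spF: "space (F n) = space M" using filt_sub[of n] unfolding subalgebra_def by auto
lemma setsF: "sets (F n) \<subseteq> sets M" using filt_sub[of n] unfolding subalgebra_def by auto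

lemma measF: "l \<le> n \<Longrightarrow> f \<in> measurable (F l) N \<Longrightarrow> f \<in> measurable (F n) N"
  by (rule measurable_from_subalg[of "F n" "F l"]) (use filt_mono spF in \<open>auto simp: subalgebra_def\<close>)

lemma measM: "f \<in> measurable (F n) N \<Longrightarrow> f \<in> measurable M N"
  by (rule measurable_from_subalg[OF filt_sub])

lemma Theta_M[measurable]: "\<Theta> n \<in> borel_measurable M" by (rule measM[OF Theta_adapted])

definition gam :: "nat \<Rightarrow> 'a \<Rightarrow> real" where "gam n \<omega> = (if n = 0 then 0 else \<gamma> n \<omega>)"

lemma gam_M[measurable]: "gam n \<in> borel_measurable M"
  unfolding gam_def by (cases "n = 0") (auto intro: measM[OF gamma_meas])

lemma gam_F: "n \<ge> 1 \<Longrightarrow> gam n \<in> borel_measurable (F (n - 1))"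
  unfolding gam_def using gamma_meas by simp

lemma gamma_M: "n \<ge> 1 \<Longrightarrow> \<gamma> n \<in> borel_measurable M" by (rule measM[OF gamma_meas])

definition S :: "nat \<Rightarrow> 'a \<Rightarrow> real" where "S n \<omega> = (\<Sum>m=1..n. \<gamma> m \<omega>)"

lemma S_gam: "S n \<omega> = (\<Sum>m=1..n. gam m \<omega>)" unfolding S_def gam_def by (intro sum.cong) auto

lemma S_M[measurable]: "S n \<in> borel_measurable M" unfolding S_gam by measurable

lemma S_F: "n < j \<Longrightarrow> S n \<in> borel_measurable (F (j - 1))"
  unfolding S_def by (intro borel_measurable_sum measF[OF _ gamma_meas]) auto

lemma S_0[simp]: "S 0 \<omega> = 0" by (simp add: S_def)
lemma S_Suc: "S (Suc n) \<omega> = S n \<omega> + \<gamma> (Suc n) \<omega>" by (simp add: S_def)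

lemma S_mono: "\<omega> \<in> space M \<Longrightarrow> n \<le> m \<Longrightarrow> S n \<omega> \<le> S m \<omega>"
  unfolding S_def by (intro sum_mono2) (auto intro: gamma_nonneg)

lemma S_unbounded: assumes "\<omega> \<in> space M" shows "\<exists>n. t \<le> S n \<omega>"
proof (rule ccontr)
  assume "\<not> ?thesis"
  hence lt: "S n \<omega> < t" for n by (meson not_le)
  have eq: "(\<Sum>i<n. ennreal (\<gamma> (Suc i) \<omega>)) = ennreal (S n \<omega>)" for n
  proof (induction n)
    case (Suc n)
    thus ?case using gamma_nonneg[OF _ assms, of "Suc n"] S_mono[OF assms, of 0 n]
      by (simp add: S_Suc ennreal_plus[symmetric] del: ennreal_plus)
  qed simp
  have "(\<Sum>n. ennreal (\<gamma> (Suc n) \<omega>)) \<le> ennreal t"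
    by (rule suminf_le_const[OF summableI]) (use lt in \<open>auto simp: eq intro: ennreal_leI less_imp_le\<close>)
  thus False using gamma_sum[OF assms] by (simp add: top_unique)
qed

lemma gamma_anti: assumes "\<omega> \<in> space M" "1 \<le> k" "k \<le> j" shows "\<gamma> j \<omega> \<le> \<gamma> k \<omega>"
  using assms(3)
proof (induction j rule: dec_induct)
  case base show ?case by simp
next
  case (step j) thus ?case using gamma_mono[of j \<omega>] assms by auto
qed

lemma gamma_lim: assumes "\<omega> \<in> space M" shows "(\<lambda>n. \<gamma> n \<omega>) \<longlonglongrightarrow> 0"
proof (rule limsup_le_liminf_real)
  show "limsup (\<lambda>n. ereal (\<gamma> n \<omega>)) \<le> ereal 0" using gamma_limsup[OF assms] by simp
  show "ereal 0 \<le> liminf (\<lambda>n. ereal (\<gamma> n \<omega>))"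
    by (rule Liminf_bounded) (use gamma_nonneg[OF _ assms] in \<open>auto simp: eventually_sequentially intro!: exI[of _ 1]\<close>)
qed

abbreviation "NN \<equiv> time_index \<gamma>"

lemma NN_S: "time_index \<gamma> t \<omega> = (LEAST n. t \<le> S n \<omega>)" unfolding time_index_def S_def by simp

lemma NN_ge: "\<omega> \<in> space M \<Longrightarrow> t \<le> S (NN t \<omega>) \<omega>"
  unfolding NN_S using S_unbounded by (metis LeastI_ex)

lemma NN_less: "n < NN t \<omega> \<Longrightarrow> S n \<omega> < t"
  unfolding NN_S using not_less_Least by (metis not_le)

lemma NN_le: "\<omega> \<in> space M \<Longrightarrow> t \<le> S n \<omega> \<Longrightarrow> NN t \<omega> \<le> n"
  unfolding NN_S by (rule Least_le)

lemma NN_mono: "\<omega> \<in> space M \<Longrightarrow> t \<le> t' \<Longrightarrow> NN t \<omega> \<le> NN t' \<omega>"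
  using NN_le NN_ge by (meson order.trans)

lemma NN_pos: "t > 0 \<Longrightarrow> \<omega> \<in> space M \<Longrightarrow> 1 \<le> NN t \<omega>"
  using NN_ge[of \<omega> t] by (cases "NN t \<omega>") auto

lemma NN_meas[measurable]: "NN t \<in> measurable M (count_space UNIV)"
  unfolding NN_S by measurable

lemma S_NN_upper: "t > 0 \<Longrightarrow> \<omega> \<in> space M \<Longrightarrow> S (NN t \<omega>) \<omega> < t + \<gamma> (NN t \<omega>) \<omega>"
proof -
  assume t: "t > 0" and w: "\<omega> \<in> space M"
  obtain k where k: "NN t \<omega> = Suc k" using NN_pos[OF t w] by (cases "NN t \<omega>") auto
  have "S k \<omega> < t" using NN_less[of k t \<omega>] k by simp
  thus ?thesis using k by (simp add: S_Suc)
qed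

end

context sa
begin

lemma D_M[measurable]: "1 \<le> n \<Longrightarrow> D n \<in> borel_measurable M"
  using D_int by (rule borel_measurable_integrable)

definition ok :: "real \<Rightarrow> nat \<Rightarrow> 'a \<Rightarrow> bool" where
  "ok R n \<omega> \<longleftrightarrow> 1 \<le> n \<and> (\<forall>l<n. norm (\<Theta> l \<omega>) ^ 2 < R)"

definition Shat :: "real \<Rightarrow> 'a \<Rightarrow> ennreal" where
  "Shat R \<omega> = (SUP n. if ok R n \<omega> then ennreal (norm (D n \<omega>) ^ 2) else 0)"

lemma pred_bounded_all:
  fixes T :: "nat \<Rightarrow> 'b \<Rightarrow> real^'d" and G :: "'b measure"
  assumes "\<And>l. l < n \<Longrightarrow> T l \<in> borel_measurable G"
  shows "Measurable.pred G (\<lambda>\<omega>. \<forall>l\<in>{..<n}. norm (T l \<omega>)^2 < R)"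
  unfolding pred_def
  apply (rule sets.sets_Collect_finite_All)
  subgoal for l
    apply (rule borel_measurable_less)
    subgoal
    apply (rule measurable_compose[OF assms[of l]])
     apply simp
    apply (rule borel_measurable_continuous_onI)
    apply (intro continuous_intros)
    done
  apply simp done
  apply simp done

lemma ok_pred: "Measurable.pred (F (n - 1)) (ok R n)"
proof -
  have 1: "Measurable.pred (F (n-1)) (\<lambda>\<omega>. \<forall>l\<in>{..<n}. norm (\<Theta> l \<omega>) ^ 2 < R)"
    by (rule pred_bounded_all) (rule measF[OF _ Theta_adapted], simp)
  have "ok R n = (\<lambda>\<omega>. 1 \<le> n \<and> (\<forall>l\<in>{..<n}. norm (\<Theta> l \<omega>) ^ 2 < R))"
    unfolding ok_def by auto
  thus ?thesis using 1 by (cases "1 \<le> n") auto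
qed

lemma ok_predM[measurable]: "Measurable.pred M (ok R n)"
  using measM ok_pred by blast

lemma Shat_M[measurable]: "Shat R \<in> borel_measurable M"
proof -
  have "(\<lambda>\<omega>. if ok R n \<omega> then ennreal (norm (D n \<omega>) ^ 2) else 0) \<in> borel_measurable M" for n
  proof (cases "1 \<le> n")
    case True
    then show ?thesis by measurable
  next
    case False
    hence "\<not> ok R n \<omega>" for \<omega> by (simp add: ok_def)
    then show ?thesis by simp
  qed
  thus ?thesis unfolding Shat_def by measurable
qed

lemma ok_entrance: "ok R n \<omega> \<Longrightarrow> enat n \<le> entrance_time \<Theta> R \<omega>"
  unfolding entrance_time_def ok_def
  by (intro INF_greatest) (auto simp: not_less[symmetric])

lemma Shat_int: "(\<integral>\<^sup>+\<omega>. Shat R \<omega> \<partial>M) < \<infinity>"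
proof -
  have "(\<integral>\<^sup>+\<omega>. Shat R \<omega> \<partial>M) \<le> (\<integral>\<^sup>+ \<omega>. (SUP n\<in>{n. n \<ge> 1 \<and> enat n \<le> entrance_time \<Theta> R \<omega>}.
        ennreal (norm (D n \<omega>) ^ 2)) \<partial>M)"
    unfolding Shat_def
  proof (intro nn_integral_mono SUP_least)
    fix \<omega> n
    show "(if ok R n \<omega> then ennreal ((norm (D n \<omega>))\<^sup>2) else 0)
      \<le> (SUP n\<in>{n. n \<ge> 1 \<and> enat n \<le> entrance_time \<Theta> R \<omega>}. ennreal (norm (D n \<omega>) ^ 2))"
    proof (cases "ok R n \<omega>")
      case True
      hence "n \<in> {n. n \<ge> 1 \<and> enat n \<le> entrance_time \<Theta> R \<omega>}"
        using ok_entrance[OF True] by (auto simp: ok_def)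
      thus ?thesis using True by (auto intro: SUP_upper)
    qed simp
  qed
  also have "\<dots> < \<infinity>" by (rule D_sup_int)
  finally show ?thesis .
qed

definition Sr :: "real \<Rightarrow> 'a \<Rightarrow> real" where "Sr R \<omega> = enn2real (Shat R \<omega>)"

lemma Sr_int: "integrable M (Sr R)"
proof (rule integrableI_bounded)
  show "Sr R \<in> borel_measurable M" unfolding Sr_def by measurable
  have "(\<integral>\<^sup>+\<omega>. ennreal (norm (Sr R \<omega>)) \<partial>M) \<le> (\<integral>\<^sup>+\<omega>. Shat R \<omega> \<partial>M)"
    unfolding Sr_def by (intro nn_integral_mono) (simp add: ennreal_enn2real_if)
  thus "(\<integral>\<^sup>+\<omega>. ennreal (norm (Sr R \<omega>)) \<partial>M) < \<infinity>" using Shat_int[of R] by simp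
qed

lemma Shat_fin_AE: "AE \<omega> in M. Shat R \<omega> \<noteq> \<infinity>"
  by (rule nn_integral_PInf_AE) (use Shat_int[of R] in auto)

lemma D_le_Sr: "ok R n \<omega> \<Longrightarrow> Shat R \<omega> \<noteq> \<infinity> \<Longrightarrow> norm (D n \<omega>) ^ 2 \<le> Sr R \<omega>"
proof -
  assume ok: "ok R n \<omega>" and fin: "Shat R \<omega> \<noteq> \<infinity>"
  have "ennreal (norm (D n \<omega>) ^ 2) \<le> Shat R \<omega>"
    unfolding Shat_def by (rule SUP_upper2[of n]) (use ok in auto)
  hence "enn2real (ennreal (norm (D n \<omega>) ^ 2)) \<le> enn2real (Shat R \<omega>)"
    using fin by (intro enn2real_mono) (auto simp: top_unique less_top)
  thus ?thesis by (simp add: Sr_def)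
qed

lemma sqrt_prod_le: "0 \<le> x \<Longrightarrow> 0 \<le> y \<Longrightarrow> x^2 \<le> s \<Longrightarrow> y^2 \<le> s \<Longrightarrow> x * y \<le> (s::real)"
proof -
  assume a: "x^2 \<le> s" "y^2 \<le> s"
  have "0 \<le> (x - y)^2" by simp
  hence "2 * (x * y) \<le> x^2 + y^2" unfolding power2_diff by simp
  thus "x * y \<le> s" using a by linarith
qed

end

lemma vec_nth_meas[measurable (raw)]:
  fixes f :: "'b \<Rightarrow> real^'d"
  assumes "f \<in> borel_measurable N"
  shows "(\<lambda>x. f x $ c) \<in> borel_measurable N"
  by (rule measurable_compose[OF assms], rule borel_measurable_continuous_onI, intro continuous_intros)

context sa
begin

definition ind :: "real \<Rightarrow> real \<Rightarrow> real \<Rightarrow> real \<Rightarrow> nat \<Rightarrow> 'a \<Rightarrow> bool" where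
  "ind R \<eta> a b i \<omega> \<longleftrightarrow> ok R i \<omega> \<and> \<gamma> i \<omega> \<le> \<eta> \<and> a \<le> S (i-1) \<omega> \<and> S (i-1) \<omega> < b"

definition X :: "real \<Rightarrow> real \<Rightarrow> real \<Rightarrow> real \<Rightarrow> nat \<Rightarrow> 'a \<Rightarrow> real" where
  "X R \<eta> a b i \<omega> = (if ind R \<eta> a b i \<omega> then \<gamma> i \<omega> * inner (\<Theta> (i-1) \<omega>) (D i \<omega>) else 0)"

lemma ind_ge1: "ind R \<eta> a b i \<omega> \<Longrightarrow> 1 \<le> i" by (simp add: ind_def ok_def)

lemma ind_pred: "Measurable.pred (F (i - 1)) (ind R \<eta> a b i)"
proof (cases "1 \<le> i")
  case True
  have [measurable]: "Measurable.pred (F (i - 1)) (ok R i)" by (rule ok_pred)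
  have [measurable]: "\<gamma> i \<in> borel_measurable (F (i - 1))" using gamma_meas True by simp
  have [measurable]: "S (i - 1) \<in> borel_measurable (F (i - 1))" using S_F True by simp
  show ?thesis unfolding ind_def by measurable
next
  case False
  hence "ind R \<eta> a b i = (\<lambda>_. False)" by (auto simp: ind_def ok_def)
  thus ?thesis by simp
qed

lemma ind_predM[measurable]: "Measurable.pred M (ind R \<eta> a b i)"
  using measM ind_pred by blast

lemma X_F: "X R \<eta> a b i \<in> borel_measurable (F i)"
proof (cases "1 \<le> i")
  case True
  have [measurable]: "Measurable.pred (F i) (ind R \<eta> a b i)" by (rule measF[OF _ ind_pred]) simp
  have [measurable]: "\<gamma> i \<in> borel_measurable (F i)" by (rule measF[OF _ gamma_meas[OF True]]) simp
  have [measurable]: "\<Theta> (i-1) \<in> borel_measurable (F i)" by (rule measF[OF _ Theta_adapted]) simp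
  have [measurable]: "\<Theta> i \<in> borel_measurable (F i)" by (rule Theta_adapted)
  have [measurable]: "g \<in> borel_measurable borel" by (rule g_meas)
  have eq: "X R \<eta> a b i \<omega> = (if ind R \<eta> a b i \<omega> then inner (\<Theta> (i-1) \<omega>) (\<Theta> i \<omega> - \<Theta> (i-1) \<omega> - \<gamma> i \<omega> *\<^sub>R g (\<Theta> (i-1) \<omega>)) else 0)"
    if "\<omega> \<in> space (F i)" for \<omega>
    using Theta_rec[OF True, of \<omega>] that spF[of i] by (simp add: X_def inner_scaleR_right)
  show ?thesis
    by (subst measurable_cong[OF eq]) (assumption, measurable)
next
  case False
  hence "X R \<eta> a b i = (\<lambda>_. 0)" by (auto simp: X_def ind_def ok_def)
  thus ?thesis by simp
qed

lemma X_M[measurable]: "X R \<eta> a b i \<in> borel_measurable M" by (rule measM[OF X_F])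

definition Yb :: "real \<Rightarrow> real \<Rightarrow> real \<Rightarrow> real \<Rightarrow> nat \<Rightarrow> 'a \<Rightarrow> real" where
  "Yb R \<eta> a b i \<omega> = (if ind R \<eta> a b i \<omega> then \<eta> * sqrt R * norm (D i \<omega>) else 0)"

lemma ind_Theta: "ind R \<eta> a b i \<omega> \<Longrightarrow> norm (\<Theta> (i-1) \<omega>) < sqrt R"
  by (rule real_less_rsqrt) (auto simp: ind_def ok_def)

lemma ind_gamma: "\<omega> \<in> space M \<Longrightarrow> ind R \<eta> a b i \<omega> \<Longrightarrow> 0 \<le> \<gamma> i \<omega> \<and> \<gamma> i \<omega> \<le> \<eta>"
  using gamma_nonneg ind_ge1 by (auto simp: ind_def)

lemma X_abs: assumes "\<omega> \<in> space M" shows "\<bar>X R \<eta> a b i \<omega>\<bar> \<le> Yb R \<eta> a b i \<omega>"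
proof (cases "ind R \<eta> a b i \<omega>")
  case True
  note g = ind_gamma[OF assms True]
  have "\<bar>X R \<eta> a b i \<omega>\<bar> = \<gamma> i \<omega> * \<bar>inner (\<Theta> (i-1) \<omega>) (D i \<omega>)\<bar>"
    using True g by (simp add: X_def abs_mult)
  also have "\<dots> \<le> \<eta> * (sqrt R * norm (D i \<omega>))"
  proof (rule mult_mono)
    have "\<bar>inner (\<Theta> (i-1) \<omega>) (D i \<omega>)\<bar> \<le> norm (\<Theta> (i-1) \<omega>) * norm (D i \<omega>)" by (rule Cauchy_Schwarz_ineq2)
    also have "\<dots> \<le> sqrt R * norm (D i \<omega>)"
      using ind_Theta[OF True] by (intro mult_right_mono) auto
    finally show "\<bar>inner (\<Theta> (i-1) \<omega>) (D i \<omega>)\<bar> \<le> sqrt R * norm (D i \<omega>)" .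
  qed (use g in auto)
  finally show ?thesis using True by (simp add: Yb_def mult.assoc)
qed (simp add: X_def Yb_def)

lemma ind_R_pos: "ind R \<eta> a b i \<omega> \<Longrightarrow> 0 < R"
proof -
  assume "ind R \<eta> a b i \<omega>"
  hence "norm (\<Theta> 0 \<omega>) ^ 2 < R" unfolding ind_def ok_def by auto
  moreover have "0 \<le> norm (\<Theta> 0 \<omega>) ^ 2" by simp
  ultimately show ?thesis by linarith
qed

lemma Yb_nonneg: "0 \<le> \<eta> \<Longrightarrow> 0 \<le> Yb R \<eta> a b i \<omega>"
  by (auto simp: Yb_def dest: ind_R_pos)

lemma Yb_prod: assumes "\<omega> \<in> space M" "Shat R \<omega> \<noteq> \<infinity>" "0 \<le> \<eta>" "0 \<le> R"
  shows "Yb R \<eta> a b i \<omega> * Yb R \<eta> a b j \<omega> \<le> \<eta>^2 * R * Sr R \<omega>"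
proof (cases "ind R \<eta> a b i \<omega> \<and> ind R \<eta> a b j \<omega>")
  case True
  have ok: "ok R i \<omega>" "ok R j \<omega>" using True by (simp_all add: ind_def)
  have "norm (D i \<omega>) * norm (D j \<omega>) \<le> Sr R \<omega>"
    by (rule sqrt_prod_le[OF norm_ge_zero norm_ge_zero D_le_Sr[OF ok(1) assms(2)] D_le_Sr[OF ok(2) assms(2)]])
  hence "(\<eta>^2 * R) * (norm (D i \<omega>) * norm (D j \<omega>)) \<le> (\<eta>^2 * R) * Sr R \<omega>"
    using assms by (intro mult_left_mono) auto
  moreover have "Yb R \<eta> a b i \<omega> * Yb R \<eta> a b j \<omega> = (\<eta>^2 * R) * (norm (D i \<omega>) * norm (D j \<omega>))"
  proof -
    have e1: "Yb R \<eta> a b i \<omega> * Yb R \<eta> a b j \<omega> = (\<eta> * sqrt R * norm (D i \<omega>)) * (\<eta> * sqrt R * norm (D j \<omega>))"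
      using True by (simp only: Yb_def if_True)
    have e2: "(\<eta> * q * x) * (\<eta> * q * y) = (\<eta>^2 * (q * q)) * (x*y)" for q x y :: real
      by (simp add: power2_eq_square algebra_simps)
    have e3: "sqrt R * sqrt R = R" using assms(4) by simp
    show ?thesis unfolding e1 e2 e3 ..
  qed
  ultimately show ?thesis by simp
next
  case False
  have "0 \<le> \<eta>^2 * R * Sr R \<omega>"
    by (intro mult_nonneg_nonneg) (simp_all add: Sr_def assms(4))
  moreover have "Yb R \<eta> a b i \<omega> * Yb R \<eta> a b j \<omega> = 0"
  proof (cases "ind R \<eta> a b i \<omega>")
    case True
    hence "\<not> ind R \<eta> a b j \<omega>" using False by blast
    hence "Yb R \<eta> a b j \<omega> = 0" unfolding Yb_def by (simp only: if_False)
    thus ?thesis by simp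
  next
    case False
    hence "Yb R \<eta> a b i \<omega> = 0" unfolding Yb_def by (simp only: if_False)
    thus ?thesis by simp
  qed
  ultimately show ?thesis by linarith
qed

end

context sa
begin

lemma sub_sigma: "sigma_finite_subalgebra M (F n)"
proof -
  have "finite_measure_subalgebra M (F n)"
    unfolding finite_measure_subalgebra_def finite_measure_subalgebra_axioms_def
    using filt_sub P.finite_measure_axioms by auto
  thus ?thesis by (rule finite_measure_subalgebra_is_sigma_finite)
qed

lemma abs_prod_le: "\<bar>x\<bar> \<le> u \<Longrightarrow> \<bar>y\<bar> \<le> v \<Longrightarrow> \<bar>x * y\<bar> \<le> u * (v::real)"
  by (simp add: abs_mult mult_mono')

lemma pair_int: assumes "0 \<le> \<eta>" "0 \<le> R"
  shows "integrable M (\<lambda>\<omega>. X R \<eta> a b i \<omega> * X R \<eta> a b j \<omega>)"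
proof (rule Bochner_Integration.integrable_bound)
  show "integrable M (\<lambda>\<omega>. \<eta>^2 * R * Sr R \<omega>)" using Sr_int by simp
  show "(\<lambda>\<omega>. X R \<eta> a b i \<omega> * X R \<eta> a b j \<omega>) \<in> borel_measurable M" by measurable
  show "AE \<omega> in M. norm (X R \<eta> a b i \<omega> * X R \<eta> a b j \<omega>) \<le> norm (\<eta>^2 * R * Sr R \<omega>)"
    using Shat_fin_AE[of R] AE_space
  proof eventually_elim
    case (elim \<omega>)
    have "\<bar>X R \<eta> a b i \<omega> * X R \<eta> a b j \<omega>\<bar> \<le> Yb R \<eta> a b i \<omega> * Yb R \<eta> a b j \<omega>"
      by (rule abs_prod_le[OF X_abs X_abs]) (use elim in auto)
    also have "\<dots> \<le> \<eta>^2 * R * Sr R \<omega>" by (rule Yb_prod) (use elim assms in auto)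
    finally show ?case by simp
  qed
qed

lemma X_orth: assumes ij: "1 \<le> i" "i < j" and A: "A \<in> sets (F (j-1))" and eta: "0 \<le> \<eta>" and R: "0 \<le> R"
  shows "(\<integral>\<omega>. X R \<eta> a b i \<omega> * X R \<eta> a b j \<omega> * indicator A \<omega> \<partial>M) = 0"
proof -
  interpret SF: sigma_finite_subalgebra M "F (j-1)" by (rule sub_sigma)
  have j1: "1 \<le> j" using ij by simp
  define f where "f c \<omega> = X R \<eta> a b i \<omega> * indicator A \<omega> * (if ind R \<eta> a b j \<omega> then \<gamma> j \<omega> else 0) * (\<Theta> (j-1) \<omega> $ c)" for c \<omega>
  have split: "X R \<eta> a b i \<omega> * X R \<eta> a b j \<omega> * indicator A \<omega> = (\<Sum>c\<in>UNIV. f c \<omega> * (D j \<omega> $ c))" for \<omega>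
    unfolding f_def X_def[of R \<eta> a b j] inner_vec_def
    by (cases "ind R \<eta> a b j \<omega>") (simp_all add: sum_distrib_left mult_ac)
  have fF: "f c \<in> borel_measurable (F (j-1))" for c
  proof -
    have [measurable]: "X R \<eta> a b i \<in> borel_measurable (F (j-1))" by (rule measF[OF _ X_F]) (use ij in simp)
    have [measurable]: "Measurable.pred (F (j-1)) (ind R \<eta> a b j)" by (rule ind_pred)
    have [measurable]: "\<gamma> j \<in> borel_measurable (F (j-1))" by (rule gamma_meas[OF j1])
    have [measurable]: "\<Theta> (j-1) \<in> borel_measurable (F (j-1))" by (rule Theta_adapted)
    have [measurable]: "A \<in> sets (F (j-1))" by (rule A)
    show ?thesis unfolding f_def by measurable
  qed
  have fM: "f c \<in> borel_measurable M" for c by (rule measM[OF fF])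
  have DcM[measurable]: "(\<lambda>\<omega>. D j \<omega> $ c) \<in> borel_measurable M" for c using D_M[OF j1] by measurable
  have fint: "integrable M (\<lambda>\<omega>. f c \<omega> * (D j \<omega> $ c))" for c
  proof (rule Bochner_Integration.integrable_bound)
    show "integrable M (\<lambda>\<omega>. \<eta>^2 * R * Sr R \<omega>)" using Sr_int by simp
    show "(\<lambda>\<omega>. f c \<omega> * (D j \<omega> $ c)) \<in> borel_measurable M" using fM DcM by measurable
    show "AE \<omega> in M. norm (f c \<omega> * (D j \<omega> $ c)) \<le> norm (\<eta>^2 * R * Sr R \<omega>)"
      using Shat_fin_AE[of R] AE_space
    proof eventually_elim
      case (elim \<omega>)
      have "\<bar>(if ind R \<eta> a b j \<omega> then \<gamma> j \<omega> else 0) * (\<Theta> (j-1) \<omega> $ c) * (D j \<omega> $ c)\<bar> \<le> Yb R \<eta> a b j \<omega>"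
      proof (cases "ind R \<eta> a b j \<omega>")
        case True
        note g = ind_gamma[OF elim(2) True]
        have "\<bar>\<gamma> j \<omega> * (\<Theta> (j-1) \<omega> $ c) * (D j \<omega> $ c)\<bar> = \<gamma> j \<omega> * (\<bar>\<Theta> (j-1) \<omega> $ c\<bar> * \<bar>D j \<omega> $ c\<bar>)"
          using g by (simp add: abs_mult)
        also have "\<dots> \<le> \<eta> * (sqrt R * norm (D j \<omega>))"
        proof (rule mult_mono)
          show "\<bar>\<Theta> (j-1) \<omega> $ c\<bar> * \<bar>D j \<omega> $ c\<bar> \<le> sqrt R * norm (D j \<omega>)"
            using component_le_norm_cart[of "\<Theta> (j-1) \<omega>" c] component_le_norm_cart[of "D j \<omega>" c]
              ind_Theta[OF True] R by (intro mult_mono) auto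
        qed (use g in auto)
        finally show ?thesis using True by (simp add: Yb_def mult.assoc)
      qed (simp add: Yb_def)
      hence "\<bar>f c \<omega> * (D j \<omega> $ c)\<bar> \<le> Yb R \<eta> a b i \<omega> * Yb R \<eta> a b j \<omega>"
        using X_abs[OF elim(2), of R \<eta> a b i] unfolding f_def
        by (cases "\<omega> \<in> A") (auto simp: mult.assoc intro: abs_prod_le Yb_nonneg[OF eta] mult_nonneg_nonneg)
      also have "\<dots> \<le> \<eta>^2 * R * Sr R \<omega>" by (rule Yb_prod) (use elim eta R in auto)
      finally show ?case by simp
    qed
  qed
  have "(\<integral>\<omega>. X R \<eta> a b i \<omega> * X R \<eta> a b j \<omega> * indicator A \<omega> \<partial>M) = (\<integral>\<omega>. (\<Sum>c\<in>UNIV. f c \<omega> * (D j \<omega> $ c)) \<partial>M)"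
    unfolding split ..
  also have "\<dots> = (\<Sum>c\<in>UNIV. \<integral>\<omega>. f c \<omega> * (D j \<omega> $ c) \<partial>M)"
    by (rule Bochner_Integration.integral_sum) (rule fint)
  also have "\<dots> = (\<Sum>c\<in>UNIV. \<integral>\<omega>. f c \<omega> * real_cond_exp M (F (j-1)) (\<lambda>x. D j x $ c) \<omega> \<partial>M)"
    by (intro sum.cong refl SF.real_cond_exp_intg(2)[symmetric] fint fF DcM)
  also have "\<dots> = (\<Sum>c\<in>(UNIV::'d set). 0)"
  proof (rule sum.cong[OF refl])
    fix c
    have "(\<integral>\<omega>. f c \<omega> * real_cond_exp M (F (j-1)) (\<lambda>x. D j x $ c) \<omega> \<partial>M) = (\<integral>\<omega>. 0 \<partial>M)"
    proof (rule Bochner_Integration.integral_cong_AE)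
      show "(\<lambda>\<omega>. f c \<omega> * real_cond_exp M (F (j-1)) (\<lambda>x. D j x $ c) \<omega>) \<in> borel_measurable M"
        using fM by measurable
      show "AE \<omega> in M. f c \<omega> * real_cond_exp M (F (j-1)) (\<lambda>x. D j x $ c) \<omega> = 0"
        using D_mart[OF j1, of c] by eventually_elim simp
    qed simp
    thus "(\<integral>\<omega>. f c \<omega> * real_cond_exp M (F (j-1)) (\<lambda>x. D j x $ c) \<omega> \<partial>M) = 0" by simp
  qed
  also have "\<dots> = 0" by simp
  finally show ?thesis .
qed

lemma ind_sum:
  assumes w: "\<omega> \<in> space M" and ab: "a \<le> b" and eta: "0 \<le> \<eta>"
  shows "(\<Sum>i\<in>{1..L}. if ind R \<eta> a b i \<omega> then \<gamma> i \<omega> else 0) \<le> b - a + \<eta>"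
proof -
  have "(\<Sum>i\<in>{1..L}. if ind R \<eta> a b i \<omega> then \<gamma> i \<omega> else 0) \<le> max 0 (S L \<omega> - a)
     \<and> (\<Sum>i\<in>{1..L}. if ind R \<eta> a b i \<omega> then \<gamma> i \<omega> else 0) \<le> b - a + \<eta>"
  proof (induction L)
    case 0
    then show ?case using ab eta by simp
  next
    case (Suc L)
    let ?s = "\<Sum>i\<in>{1..L}. if ind R \<eta> a b i \<omega> then \<gamma> i \<omega> else 0"
    have eq: "(\<Sum>i\<in>{1..Suc L}. if ind R \<eta> a b i \<omega> then \<gamma> i \<omega> else 0)
        = ?s + (if ind R \<eta> a b (Suc L) \<omega> then \<gamma> (Suc L) \<omega> else 0)" by simp
    have Smono: "S L \<omega> \<le> S (Suc L) \<omega>" by (rule S_mono[OF w]) simp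
    show ?case
    proof (cases "ind R \<eta> a b (Suc L) \<omega>")
      case True
      hence c: "a \<le> S L \<omega>" "S L \<omega> < b" "\<gamma> (Suc L) \<omega> \<le> \<eta>" by (auto simp: ind_def)
      have "?s \<le> S L \<omega> - a" using Suc.IH c by linarith
      thus ?thesis unfolding eq using True c by (simp add: S_Suc)
    next
      case False
      thus ?thesis unfolding eq using Suc.IH Smono by auto
    qed
  qed
  thus ?thesis by blast
qed

lemma Xsq_sum:
  assumes ab: "a \<le> b" and eta: "0 \<le> \<eta>" and R: "0 \<le> R"
  shows "(\<Sum>i\<in>{1..L}. \<integral>\<omega>. X R \<eta> a b i \<omega> * X R \<eta> a b i \<omega> \<partial>M) \<le> \<eta> * R * (b - a + \<eta>) * (\<integral>\<omega>. Sr R \<omega> \<partial>M)"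
proof -
  have "(\<Sum>i\<in>{1..L}. \<integral>\<omega>. X R \<eta> a b i \<omega> * X R \<eta> a b i \<omega> \<partial>M) = (\<integral>\<omega>. (\<Sum>i\<in>{1..L}. X R \<eta> a b i \<omega> * X R \<eta> a b i \<omega>) \<partial>M)"
    by (rule Bochner_Integration.integral_sum[symmetric]) (rule pair_int[OF eta R])
  also have "\<dots> \<le> (\<integral>\<omega>. \<eta> * R * (b - a + \<eta>) * Sr R \<omega> \<partial>M)"
  proof (rule integral_mono_AE)
    show "integrable M (\<lambda>\<omega>. \<Sum>i\<in>{1..L}. X R \<eta> a b i \<omega> * X R \<eta> a b i \<omega>)"
      by (intro Bochner_Integration.integrable_sum pair_int eta R)
    show "integrable M (\<lambda>\<omega>. \<eta> * R * (b - a + \<eta>) * Sr R \<omega>)" using Sr_int by simp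
    show "AE \<omega> in M. (\<Sum>i\<in>{1..L}. X R \<eta> a b i \<omega> * X R \<eta> a b i \<omega>) \<le> \<eta> * R * (b - a + \<eta>) * Sr R \<omega>"
      using Shat_fin_AE[of R] AE_space
    proof eventually_elim
      case (elim \<omega>)
      have Sr0: "0 \<le> Sr R \<omega>" by (simp add: Sr_def)
      have trm: "X R \<eta> a b i \<omega> * X R \<eta> a b i \<omega> \<le> (\<eta> * R * Sr R \<omega>) * (if ind R \<eta> a b i \<omega> then \<gamma> i \<omega> else 0)" for i
      proof (cases "ind R \<eta> a b i \<omega>")
        case True
        note g = ind_gamma[OF elim(2) True]
        have ok: "ok R i \<omega>" using True by (simp add: ind_def)
        have Dl: "norm (D i \<omega>)^2 \<le> Sr R \<omega>" by (rule D_le_Sr[OF ok elim(1)])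
        have Th: "norm (\<Theta> (i-1) \<omega>)^2 \<le> R"
          using ind_Theta[OF True] R by (metis less_imp_le norm_ge_zero power_mono real_sqrt_pow2)
        have "X R \<eta> a b i \<omega> * X R \<eta> a b i \<omega> = \<gamma> i \<omega>^2 * (inner (\<Theta> (i-1) \<omega>) (D i \<omega>))^2"
          using True by (simp add: X_def power2_eq_square)
        also have "\<dots> \<le> \<gamma> i \<omega>^2 * (norm (\<Theta> (i-1) \<omega>)^2 * norm (D i \<omega>)^2)"
        proof (rule mult_left_mono)
          have "\<bar>inner (\<Theta> (i-1) \<omega>) (D i \<omega>)\<bar> \<le> norm (\<Theta> (i-1) \<omega>) * norm (D i \<omega>)" by (rule Cauchy_Schwarz_ineq2)
          hence "\<bar>inner (\<Theta> (i-1) \<omega>) (D i \<omega>)\<bar>^2 \<le> (norm (\<Theta> (i-1) \<omega>) * norm (D i \<omega>))^2"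
            by (rule power_mono) simp
          thus "(inner (\<Theta> (i-1) \<omega>) (D i \<omega>))^2 \<le> norm (\<Theta> (i-1) \<omega>)^2 * norm (D i \<omega>)^2"
            by (simp add: power_mult_distrib)
        qed simp
        also have "\<dots> \<le> (\<gamma> i \<omega> * \<eta>) * (R * Sr R \<omega>)"
        proof (rule mult_mono)
          show "\<gamma> i \<omega>^2 \<le> \<gamma> i \<omega> * \<eta>" using g by (simp add: power2_eq_square mult_left_mono)
          show "norm (\<Theta> (i-1) \<omega>)^2 * norm (D i \<omega>)^2 \<le> R * Sr R \<omega>"
            using Th Dl R by (intro mult_mono) auto
        qed (use g R Sr0 in auto)
        finally show ?thesis using True by (simp add: mult_ac)
      qed (simp add: X_def)
      have "(\<Sum>i\<in>{1..L}. X R \<eta> a b i \<omega> * X R \<eta> a b i \<omega>) \<le> (\<Sum>i\<in>{1..L}. (\<eta> * R * Sr R \<omega>) * (if ind R \<eta> a b i \<omega> then \<gamma> i \<omega> else 0))"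
        by (rule sum_mono) (rule trm)
      also have "\<dots> = (\<eta> * R * Sr R \<omega>) * (\<Sum>i\<in>{1..L}. if ind R \<eta> a b i \<omega> then \<gamma> i \<omega> else 0)"
        by (simp add: sum_distrib_left)
      also have "\<dots> \<le> (\<eta> * R * Sr R \<omega>) * (b - a + \<eta>)"
        by (rule mult_left_mono[OF ind_sum[OF elim(2) ab eta]]) (use eta R Sr0 in simp)
      finally show ?case by (simp add: mult_ac)
    qed
  qed
  also have "\<dots> = \<eta> * R * (b - a + \<eta>) * (\<integral>\<omega>. Sr R \<omega> \<partial>M)" by simp
  finally show ?thesis .
qed

definition Mbad :: "real \<Rightarrow> real \<Rightarrow> real \<Rightarrow> real \<Rightarrow> real \<Rightarrow> 'a set" where
  "Mbad R \<eta> a b lam = {\<omega>\<in>space M. \<exists>j. lam \<le> \<bar>\<Sum>i\<in>{1..j}. X R \<eta> a b i \<omega>\<bar>}"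

lemma Mbad_sets[measurable]: "Mbad R \<eta> a b lam \<in> sets M"
  unfolding Mbad_def by measurable

lemma Mbad_bound:
  assumes ab: "a \<le> b" and eta: "0 \<le> \<eta>" and R: "0 \<le> R" and lam: "0 < lam"
  shows "lam^2 * measure M (Mbad R \<eta> a b lam) \<le> \<eta> * R * (b - a + \<eta>) * (\<integral>\<omega>. Sr R \<omega> \<partial>M)"
proof -
  define B where "B L = {\<omega>\<in>space M. \<exists>j\<le>L. lam \<le> \<bar>\<Sum>i\<in>{1..j}. X R \<eta> a b i \<omega>\<bar>}" for L
  have BL: "lam^2 * measure M (B L) \<le> \<eta> * R * (b - a + \<eta>) * (\<integral>\<omega>. Sr R \<omega> \<partial>M)" for L
  proof -
    have "lam^2 * measure M (B L) \<le> (\<Sum>i\<in>{1..L}. \<integral>\<omega>. X R \<eta> a b i \<omega> * X R \<eta> a b i \<omega> \<partial>M)"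
      unfolding B_def
    proof (rule maximal_ineq[OF P.finite_measure_axioms filt_sub filt_mono X_F pair_int[OF eta R] _ lam])
      fix i j A assume "1 \<le> i" "i < j" "A \<in> sets (F (j - 1))"
      thus "(\<integral>\<omega>. X R \<eta> a b i \<omega> * X R \<eta> a b j \<omega> * indicator A \<omega> \<partial>M) = 0"
        by (rule X_orth[OF _ _ _ eta R])
    qed
    also have "\<dots> \<le> \<eta> * R * (b - a + \<eta>) * (\<integral>\<omega>. Sr R \<omega> \<partial>M)" by (rule Xsq_sum[OF ab eta R])
    finally show ?thesis .
  qed
  have Bsets: "range B \<subseteq> sets M"
  proof safe
    fix L
    have "B L = (\<Union>j\<in>{..L}. {\<omega>\<in>space M. lam \<le> \<bar>\<Sum>i\<in>{1..j}. X R \<eta> a b i \<omega>\<bar>})"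
      unfolding B_def by auto
    also have "\<dots> \<in> sets M" by measurable
    finally show "B L \<in> sets M" .
  qed
  have inc: "incseq B" unfolding B_def incseq_def by (auto intro: order_trans)
  have U: "(\<Union>L. B L) = Mbad R \<eta> a b lam" unfolding B_def Mbad_def by auto
  have "(\<lambda>L. lam^2 * measure M (B L)) \<longlonglongrightarrow> lam^2 * measure M (\<Union>L. B L)"
    by (intro tendsto_mult tendsto_const P.finite_Lim_measure_incseq Bsets inc)
  thus ?thesis unfolding U by (rule LIMSEQ_le_const2) (use BL in auto)
qed

end

lemma locbdd_compact:
  fixes g :: "'x::metric_space \<Rightarrow> 'y::real_normed_vector"
  assumes lb: "locally_bounded g" and K: "compact K"
  shows "bounded (g ` K)"
proof -
  obtain e where e: "\<And>x. e x > 0 \<and> bounded (g ` ball x (e x))"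
    using lb unfolding locally_bounded_def by metis
  have "K \<subseteq> (\<Union>x\<in>K. ball x (e x))" using e by auto
  then obtain T where T: "T \<subseteq> K" "finite T" "K \<subseteq> (\<Union>x\<in>T. ball x (e x))"
    using compactE_image[OF K, of K "\<lambda>x. ball x (e x)"] by auto
  have "g ` K \<subseteq> (\<Union>x\<in>T. g ` ball x (e x))" using T(3) by blast
  moreover have "bounded (\<Union>x\<in>T. g ` ball x (e x))" using T(2) e by auto
  ultimately show ?thesis using bounded_subset by blast
qed

context sa
begin

lemma g_bound: "\<exists>G\<ge>0. \<forall>\<theta>. norm \<theta> ^ 2 < R \<longrightarrow> norm (g \<theta>) \<le> G"
proof -
  have "bounded (g ` cball 0 (sqrt \<bar>R\<bar>))" by (rule locbdd_compact[OF g_locbdd compact_cball])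
  then obtain G where G: "\<And>y. y \<in> g ` cball 0 (sqrt \<bar>R\<bar>) \<Longrightarrow> norm y \<le> G" unfolding bounded_iff by blast
  have "norm (g \<theta>) \<le> max G 0" if "norm \<theta> ^ 2 < R" for \<theta>
  proof -
    have "norm \<theta> \<le> sqrt \<bar>R\<bar>" using that by (intro real_le_rsqrt) auto
    hence "\<theta> \<in> cball 0 (sqrt \<bar>R\<bar>)" by (simp add: dist_norm)
    thus ?thesis using G by force
  qed
  thus ?thesis by (intro exI[of _ "max G 0"]) auto
qed

definition EE :: "'a set" where "EE = {\<omega> \<in> space M. bdd_above ((\<lambda>n. norm (\<Theta> n \<omega>)) ` {1..})}"
definition ER :: "real \<Rightarrow> 'a set" where "ER R = {\<omega> \<in> space M. \<forall>n. norm (\<Theta> n \<omega>) ^ 2 < R}"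

lemma EE_alt: "EE = {\<omega> \<in> space M. \<exists>B::nat. \<forall>n. 1 \<le> n \<longrightarrow> norm (\<Theta> n \<omega>) \<le> real B}"
proof -
  have "bdd_above ((\<lambda>n. norm (\<Theta> n \<omega>)) ` {1..}) \<longleftrightarrow> (\<exists>B::nat. \<forall>n. 1 \<le> n \<longrightarrow> norm (\<Theta> n \<omega>) \<le> real B)" for \<omega>
  proof
    assume "bdd_above ((\<lambda>n. norm (\<Theta> n \<omega>)) ` {1..})"
    then obtain C where C: "\<And>n. 1 \<le> n \<Longrightarrow> norm (\<Theta> n \<omega>) \<le> C" unfolding bdd_above_def by auto
    show "\<exists>B::nat. \<forall>n. 1 \<le> n \<longrightarrow> norm (\<Theta> n \<omega>) \<le> real B"
      by (intro exI[of _ "nat \<lceil>C\<rceil>"]) (use C real_nat_ceiling_ge order_trans in blast)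
  next
    assume "\<exists>B::nat. \<forall>n. 1 \<le> n \<longrightarrow> norm (\<Theta> n \<omega>) \<le> real B"
    thus "bdd_above ((\<lambda>n. norm (\<Theta> n \<omega>)) ` {1..})" unfolding bdd_above_def by auto
  qed
  thus ?thesis unfolding EE_def by auto
qed

lemma EE_sets[measurable]: "EE \<in> sets M" unfolding EE_alt by measurable
lemma ER_sets[measurable]: "ER R \<in> sets M" unfolding ER_def by measurable

lemma EE_ER_small: assumes "\<epsilon> > 0" shows "\<exists>R\<ge>1. measure M (EE - ER R) \<le> \<epsilon>"
proof -
  define A where "A r = EE - ER (real r)" for r :: nat
  have Asets: "range A \<subseteq> sets M" unfolding A_def by auto
  have dec: "decseq A" unfolding A_def decseq_def ER_def
    by (auto, meson less_le_trans of_nat_le_iff)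
  have emp: "(\<Inter>r. A r) = {}"
  proof safe
    fix \<omega> assume w: "\<omega> \<in> (\<Inter>r. A r)"
    hence "\<omega> \<in> EE" unfolding A_def by auto
    then obtain B :: nat where B: "\<And>n. 1 \<le> n \<Longrightarrow> norm (\<Theta> n \<omega>) \<le> real B" and sp: "\<omega> \<in> space M"
      unfolding EE_alt by auto
    obtain r :: nat where r: "max (real B ^ 2) (norm (\<Theta> 0 \<omega>) ^ 2) < real r" using reals_Archimedean2 by blast
    have "norm (\<Theta> n \<omega>) ^ 2 < real r" for n
    proof (cases "n = 0")
      case False
      hence "norm (\<Theta> n \<omega>) ^ 2 \<le> real B ^ 2" using B[of n] by (intro power_mono) auto
      thus ?thesis using r by linarith
    qed (use r in auto)
    hence "\<omega> \<in> ER (real r)" using sp by (simp add: ER_def)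
    thus "\<omega> \<in> {}" using w unfolding A_def by auto
  qed
  have "(\<lambda>r. measure M (A r)) \<longlonglongrightarrow> 0"
    using P.finite_Lim_measure_decseq[OF Asets dec] emp by simp
  then obtain r0 where r0: "\<And>r. r \<ge> r0 \<Longrightarrow> measure M (A r) < \<epsilon>"
    using assms by (auto simp: lim_sequentially dist_real_def)
  show ?thesis
    by (intro exI[of _ "real (max r0 1)"] conjI) (use r0[of "max r0 1"] in \<open>auto simp: A_def\<close>)
qed

lemma Sr_nonneg: "0 \<le> Sr R \<omega>" by (simp add: Sr_def)

lemma Markov_Sr: assumes "K > 0"
  shows "measure M {\<omega>\<in>space M. K \<le> Sr R \<omega>} \<le> (\<integral>\<omega>. Sr R \<omega> \<partial>M) / K"
proof -
  have Sm[measurable]: "Sr R \<in> borel_measurable M" unfolding Sr_def by measurable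
  have s: "{\<omega>\<in>space M. K \<le> Sr R \<omega>} \<in> sets M" by measurable
  have "K * measure M {\<omega>\<in>space M. K \<le> Sr R \<omega>} = (\<integral>\<omega>. K * indicator {\<omega>\<in>space M. K \<le> Sr R \<omega>} \<omega> \<partial>M)"
    using s by simp
  also have "\<dots> \<le> (\<integral>\<omega>. Sr R \<omega> \<partial>M)"
  proof (rule Bochner_Integration.integral_mono)
    show "integrable M (\<lambda>\<omega>. K * indicator {\<omega>\<in>space M. K \<le> Sr R \<omega>} \<omega>)"
      using s by (simp add: integrable_indicator_iff P.emeasure_finite less_top[symmetric])
  qed (use Sr_int assms Sr_nonneg in \<open>auto simp: indicator_def\<close>)
  finally show ?thesis using assms by (simp add: field_simps)
qed

lemma Shat_inf_null: "measure M {\<omega>\<in>space M. Shat R \<omega> = \<infinity>} = 0"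
proof -
  have "emeasure M {\<omega>\<in>space M. Shat R \<omega> = \<infinity>} = 0"
    using Shat_fin_AE[of R] by (subst (asm) AE_iff_measurable[OF _ refl]) auto
  thus ?thesis by (simp add: measure_def)
qed

lemma gamma_event_small:
  assumes eta: "\<eta> > 0" and T: "T \<ge> 0" and del: "\<delta> > 0"
  shows "(\<lambda>n. measure M {\<omega>\<in>space M. \<eta> < gam (NN (real n * \<delta> - T) \<omega>) \<omega>}) \<longlonglongrightarrow> 0"
proof -
  define s :: "nat \<Rightarrow> 'a \<Rightarrow> real" where "s n \<omega> = indicator {\<omega>\<in>space M. \<eta> < gam (NN (real n * \<delta> - T) \<omega>) \<omega>} \<omega>" for n \<omega>
  have gm[measurable]: "(\<lambda>\<omega>. gam (NN t \<omega>) \<omega>) \<in> borel_measurable M" for t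
    by (rule measurable_compose_countable[OF gam_M NN_meas])
  have sets: "{\<omega>\<in>space M. \<eta> < gam (NN (real n * \<delta> - T) \<omega>) \<omega>} \<in> sets M" for n by measurable
  have "(\<lambda>n. \<integral>\<omega>. s n \<omega> \<partial>M) \<longlonglongrightarrow> (\<integral>\<omega>. 0 \<partial>M)"
  proof (rule integral_dominated_convergence[where w="\<lambda>_. 1"])
    show "(\<lambda>_. 0::real) \<in> borel_measurable M" by simp
    show "s n \<in> borel_measurable M" for n unfolding s_def using sets by simp
    show "integrable M (\<lambda>_. 1::real)" by simp
    show "AE x in M. norm (s n x) \<le> 1" for n by (auto simp: s_def indicator_def)
    show "AE \<omega> in M. (\<lambda>n. s n \<omega>) \<longlonglongrightarrow> 0"
    proof (rule AE_I2)
      fix \<omega> assume w: "\<omega> \<in> space M"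
      have gl: "(\<lambda>n. \<gamma> n \<omega>) \<longlonglongrightarrow> 0" by (rule gamma_lim[OF w])
      then obtain J where J: "\<And>j. j \<ge> J \<Longrightarrow> \<gamma> j \<omega> < \<eta>"
        using eta by (auto simp: lim_sequentially dist_real_def) (metis abs_less_iff)
      obtain n0 :: nat where n0: "S J \<omega> + T < real n0 * \<delta>"
      proof -
        obtain n0 :: nat where "(S J \<omega> + T) / \<delta> < real n0" using reals_Archimedean2 by blast
        thus ?thesis using del that by (auto simp: field_simps)
      qed
      have "s n \<omega> = 0" if "n \<ge> n0" for n
      proof -
        have "real n0 * \<delta> \<le> real n * \<delta>" using that del by (intro mult_right_mono) auto
        hence lt: "S J \<omega> < real n * \<delta> - T" using n0 by linarith
        have "J \<le> NN (real n * \<delta> - T) \<omega>"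
        proof (rule ccontr)
          assume "\<not> ?thesis"
          hence "S (NN (real n * \<delta> - T) \<omega>) \<omega> \<le> S J \<omega>" using S_mono[OF w] by simp
          thus False using NN_ge[OF w, of "real n * \<delta> - T"] lt by linarith
        qed
        hence "gam (NN (real n * \<delta> - T) \<omega>) \<omega> \<le> \<eta>" using J eta by (auto simp: gam_def less_imp_le)
        thus ?thesis by (simp add: s_def indicator_def)
      qed
      thus "(\<lambda>n. s n \<omega>) \<longlonglongrightarrow> 0"
        by (intro tendsto_eventually) (auto simp: eventually_sequentially)
    qed
  qed
  thus ?thesis using sets by (simp add: s_def)
qed

end

lemma sum_split_k:
  fixes f :: "nat \<Rightarrow> real"
  assumes "k \<le> j"
  shows "(\<Sum>i\<in>{1..j}. f i) = (\<Sum>i\<in>{1..k}. f i) + (\<Sum>i\<in>{k<..j}. f i)"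
proof -
  have "{1..j} = {1..k} \<union> {k<..j}" using assms by auto
  moreover have "{1..k} \<inter> {k<..j} = {}" by auto
  ultimately show ?thesis by (simp add: sum.union_disjoint)
qed

context sa
begin

lemma pathwise:
  assumes w: "\<omega> \<in> space M" and wER: "\<omega> \<in> ER R"
    and G: "\<And>\<theta>. norm \<theta> ^ 2 < R \<Longrightarrow> norm (g \<theta>) \<le> G" and G0: "0 \<le> G"
    and Sfin: "Shat R \<omega> \<noteq> \<infinity>" and SK: "Sr R \<omega> < K"
    and eta: "0 < \<eta>" "\<eta> \<le> 1" "2 * c * \<eta> \<le> 1"
    and a: "0 < a" "a \<le> t0" "t0 \<le> b"
    and gk: "\<gamma> (NN a \<omega>) \<omega> \<le> \<eta>"
    and mart: "\<And>j. \<bar>\<Sum>i\<in>{1..j}. X R \<eta> a b i \<omega>\<bar> < \<rho>"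
    and esmall: "2 * \<eta> * (G^2 + K) * (b - a + 1) \<le> \<rho>"
    and m: "NN t0 \<omega> \<le> m" "m \<le> NN b \<omega>"
  shows "norm (\<Theta> m \<omega>) ^ 2 \<le> R * exp (-2 * c * (t0 - a - \<eta>)) + 5 * \<rho>"
proof -
  define k where "k = NN a \<omega>"
  have k1: "1 \<le> k" unfolding k_def using NN_pos[OF a(1) w] .
  have km: "k \<le> m" unfolding k_def using NN_mono[OF w a(2)] m(1) by linarith
  have kb: "k \<le> NN b \<omega>" using km m by linarith
  have ER': "\<And>n. norm (\<Theta> n \<omega>) ^ 2 < R" using wER by (simp add: ER_def)
  have R0: "0 \<le> R" using ER'[of 0] by (metis le_less_trans not_le zero_le_power2 less_imp_le)
  have gj: "\<gamma> j \<omega> \<le> \<eta>" if "k \<le> j" for j using gamma_anti[OF w k1 that] gk unfolding k_def by linarith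
  have gpos: "0 \<le> \<gamma> j \<omega>" if "1 \<le> j" for j using gamma_nonneg[OF that w] .
  have Ska: "a \<le> S k \<omega>" unfolding k_def by (rule NN_ge[OF w])
  have ind_in: "ind R \<eta> a b j \<omega>" if "k < j" "j \<le> m" for j
  proof -
    have "ok R j \<omega>" using that k1 ER' by (simp add: ok_def)
    moreover have "a \<le> S (j-1) \<omega>" using Ska S_mono[OF w, of k "j-1"] that by linarith
    moreover have "S (j-1) \<omega> < b" by (rule NN_less) (use that m in linarith)
    ultimately show ?thesis using gj[of j] that by (simp add: ind_def)
  qed
  have ind_out: "X R \<eta> a b i \<omega> = 0" if "i \<le> k" for i
  proof -
    have "\<not> ind R \<eta> a b i \<omega>"
    proof
      assume "ind R \<eta> a b i \<omega>"
      hence "1 \<le> i" "a \<le> S (i-1) \<omega>" by (auto simp: ind_def ok_def)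
      moreover have "S (i-1) \<omega> < a" unfolding k_def[symmetric] by (rule NN_less[of _ a \<omega>, folded k_def]) (use that \<open>1 \<le> i\<close> in linarith)
      ultimately show False by linarith
    qed
    thus ?thesis by (simp add: X_def)
  qed
  have Sdiff: "(\<Sum>i\<in>{k<..j}. \<gamma> i \<omega>) = S j \<omega> - S k \<omega>" if "k \<le> j" for j
    using sum_split_k[OF that, of "\<lambda>i. \<gamma> i \<omega>"] by (simp add: S_def)
  have lyap_res: "norm (\<Theta> m \<omega>) ^ 2 \<le> R * exp (-2*c*(\<Sum>i\<in>{k<..m}. \<gamma> i \<omega>)) + 5 * \<rho>"
  proof (rule lyap[where x="\<lambda>j. norm (\<Theta> j \<omega>) ^ 2" and \<gamma>="\<lambda>j. \<gamma> j \<omega>" and \<Delta>="\<lambda>j. X R \<eta> a b j \<omega>"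
        and e="\<lambda>j. 2 * (\<gamma> j \<omega>)^2 * (G^2 + K)" and k=k and m=m])
    fix j assume j: "k < j" "j \<le> m"
    have j1: "1 \<le> j" using j k1 by linarith
    have okj: "ok R j \<omega>" using ind_in[OF j] by (simp add: ind_def)
    have Xj: "X R \<eta> a b j \<omega> = \<gamma> j \<omega> * inner (\<Theta> (j-1) \<omega>) (D j \<omega>)" using ind_in[OF j] by (simp add: X_def)
    have "norm (\<Theta> j \<omega>) ^ 2 = norm (\<Theta> (j-1) \<omega> + \<gamma> j \<omega> *\<^sub>R g (\<Theta> (j-1) \<omega>) + \<gamma> j \<omega> *\<^sub>R D j \<omega>) ^ 2"
      using Theta_rec[OF j1 w] by simp
    also have "\<dots> \<le> (1 - 2 * c * \<gamma> j \<omega>) * norm (\<Theta> (j-1) \<omega>) ^ 2 + 2 * (\<gamma> j \<omega> * inner (\<Theta> (j-1) \<omega>) (D j \<omega>)) + 2 * (\<gamma> j \<omega>)^2 * (G^2 + K)"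
    proof (rule step_ineq)
      show "inner (\<Theta> (j-1) \<omega>) (g (\<Theta> (j-1) \<omega>)) \<le> - c * norm (\<Theta> (j-1) \<omega>) ^ 2" by (rule g_coercive)
      show "norm (g (\<Theta> (j-1) \<omega>)) \<le> G" by (rule G[OF ER'])
      show "norm (D j \<omega>) ^ 2 \<le> K" using D_le_Sr[OF okj Sfin] SK by linarith
      show "0 \<le> \<gamma> j \<omega>" by (rule gpos[OF j1])
    qed
    finally show "norm (\<Theta> j \<omega>) ^ 2 \<le> (1 - 2*c*\<gamma> j \<omega>) * norm (\<Theta> (j-1) \<omega>) ^ 2 + 2 * X R \<eta> a b j \<omega> + 2 * (\<gamma> j \<omega>)^2 * (G^2 + K)"
      unfolding Xj by simp
  next
    fix j assume j: "k < j" "j \<le> m"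
    have "\<gamma> j \<omega> \<le> \<eta>" using gj j by simp
    hence "2 * c * \<gamma> j \<omega> \<le> 2 * c * \<eta>" using c_pos by simp
    thus "0 \<le> \<gamma> j \<omega> \<and> 2 * c * \<gamma> j \<omega> \<le> 1" using gpos[of j] j k1 eta by auto
  next
    fix j assume j: "k \<le> j" "j \<le> m"
    have "(\<Sum>i\<in>{1..j}. X R \<eta> a b i \<omega>) = (\<Sum>i\<in>{1..k}. X R \<eta> a b i \<omega>) + (\<Sum>i\<in>{k<..j}. X R \<eta> a b i \<omega>)"
      by (rule sum_split_k[OF j(1)])
    also have "(\<Sum>i\<in>{1..k}. X R \<eta> a b i \<omega>) = 0" by (intro sum.neutral ballI ind_out) auto
    finally show "\<bar>\<Sum>i\<in>{k<..j}. X R \<eta> a b i \<omega>\<bar> \<le> \<rho>" using mart[of j] by simp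
  next
    have "(\<Sum>i\<in>{k<..m}. 2 * (\<gamma> i \<omega>)^2 * (G^2 + K)) \<le> (\<Sum>i\<in>{k<..m}. (2 * \<eta> * (G^2 + K)) * \<gamma> i \<omega>)"
    proof (rule sum_mono)
      fix i assume i: "i \<in> {k<..m}"
      have g0: "0 \<le> \<gamma> i \<omega>" using gpos[of i] i k1 by auto
      have "(\<gamma> i \<omega>)^2 \<le> \<eta> * \<gamma> i \<omega>" using gj[of i] i g0 by (simp add: power2_eq_square mult_right_mono)
      moreover have GK: "0 \<le> 2 * (G^2 + K)" using SK Sr_nonneg[of R \<omega>] by simp
      ultimately have h: "(\<gamma> i \<omega>)^2 * (2 * (G^2 + K)) \<le> (\<eta> * \<gamma> i \<omega>) * (2 * (G^2 + K))"
        by (rule mult_right_mono)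
      have e1: "2 * (\<gamma> i \<omega>)^2 * (G^2 + K) = (\<gamma> i \<omega>)^2 * (2 * (G^2 + K))" by (simp only: mult_ac)
      have e2: "(2 * \<eta> * (G^2 + K)) * \<gamma> i \<omega> = (\<eta> * \<gamma> i \<omega>) * (2 * (G^2 + K))" by (simp only: mult_ac)
      show "2 * (\<gamma> i \<omega>)^2 * (G^2 + K) \<le> (2 * \<eta> * (G^2 + K)) * \<gamma> i \<omega>"
        unfolding e1 e2 by (rule h)
    qed
    also have "\<dots> = (2 * \<eta> * (G^2 + K)) * (S m \<omega> - S k \<omega>)" by (simp add: sum_distrib_left[symmetric] Sdiff[OF km])
    also have "\<dots> \<le> (2 * \<eta> * (G^2 + K)) * (b - a + 1)"
    proof (rule mult_left_mono)
      have "S m \<omega> \<le> S (NN b \<omega>) \<omega>" by (rule S_mono[OF w m(2)])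
      also have "\<dots> < b + \<gamma> (NN b \<omega>) \<omega>" by (rule S_NN_upper) (use a w in auto)
      also have "\<dots> \<le> b + 1" using gj[OF kb] eta by simp
      finally show "S m \<omega> - S k \<omega> \<le> b - a + 1" using Ska by linarith
      show "0 \<le> 2 * \<eta> * (G^2 + K)" using eta SK Sr_nonneg[of R \<omega>] by simp
    qed
    finally show "(\<Sum>i\<in>{k<..m}. 2 * (\<gamma> i \<omega>)^2 * (G^2 + K)) \<le> \<rho>" using esmall by simp
  next
    fix j show "0 \<le> norm (\<Theta> j \<omega>) ^ 2" by simp
  next
    fix j assume j: "k < j" "j \<le> m"
    have "0 \<le> G^2 + K" using SK Sr_nonneg[of R \<omega>] by simp
    thus "0 \<le> 2 * (\<gamma> j \<omega>)^2 * (G^2 + K)" by simp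
  next
    show "norm (\<Theta> k \<omega>) ^ 2 \<le> R" using ER'[of k] by simp
  qed (use km c_pos in simp_all)
  have "t0 - a - \<eta> \<le> (\<Sum>i\<in>{k<..m}. \<gamma> i \<omega>)"
  proof -
    have "t0 \<le> S (NN t0 \<omega>) \<omega>" by (rule NN_ge[OF w])
    also have "\<dots> \<le> S m \<omega>" by (rule S_mono[OF w m(1)])
    finally have 1: "t0 \<le> S m \<omega>" .
    have "S k \<omega> < a + \<gamma> k \<omega>" unfolding k_def by (rule S_NN_upper[OF a(1) w])
    moreover have "\<gamma> k \<omega> \<le> \<eta>" using gj by simp
    ultimately show ?thesis unfolding Sdiff[OF km] using 1 by linarith
  qed
  hence "exp (-2*c*(\<Sum>i\<in>{k<..m}. \<gamma> i \<omega>)) \<le> exp (-2 * c * (t0 - a - \<eta>))"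
    using c_pos by simp
  hence "R * exp (-2*c*(\<Sum>i\<in>{k<..m}. \<gamma> i \<omega>)) \<le> R * exp (-2 * c * (t0 - a - \<eta>))"
    using R0 by (rule mult_left_mono)
  thus ?thesis using lyap_res by linarith
qed

end

lemma eta_helper: "0 \<le> (A::real) \<Longrightarrow> 0 \<le> \<eta> \<Longrightarrow> \<eta> \<le> r / (A + 1) \<Longrightarrow> \<eta> * A \<le> r"
proof -
  assume A: "0 \<le> A" and e: "0 \<le> \<eta>" and le: "\<eta> \<le> r / (A + 1)"
  have "\<eta> * (A + 1) \<le> r" using le A by (simp add: pos_le_divide_eq)
  moreover have "\<eta> * A \<le> \<eta> * (A + 1)" using e by (simp add: mult_left_mono)
  ultimately show ?thesis by linarith
qed

context sa
begin

lemma Max_meas: "(\<lambda>\<omega>. Max ((\<lambda>m. norm (\<Theta> m \<omega>)) ` {NN s \<omega>..NN s' \<omega>})) \<in> borel_measurable M"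
proof -
  have h: "(\<lambda>\<omega>. Max ((\<lambda>m. norm (\<Theta> m \<omega>)) ` {i..j})) \<in> borel_measurable M" for i j
    by (rule borel_measurable_Max) auto
  have h2: "(\<lambda>\<omega>. Max ((\<lambda>m. norm (\<Theta> m \<omega>)) ` {i..NN s' \<omega>})) \<in> borel_measurable M" for i
    by (rule measurable_compose_countable[where f="\<lambda>j \<omega>. Max ((\<lambda>m. norm (\<Theta> m \<omega>)) ` {i..j})", OF h NN_meas])
  show ?thesis
    by (rule measurable_compose_countable[where f="\<lambda>i \<omega>. Max ((\<lambda>m. norm (\<Theta> m \<omega>)) ` {i..NN s' \<omega>})", OF h2 NN_meas])
qed

lemma Max_ge: assumes "\<omega> \<in> space M" "s \<le> s'" "m \<in> {NN s \<omega>..NN s' \<omega>}"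
  shows "norm (\<Theta> m \<omega>) \<le> Max ((\<lambda>m. norm (\<Theta> m \<omega>)) ` {NN s \<omega>..NN s' \<omega>})"
  using assms by (intro Max_ge) auto

lemma Max_nonneg: assumes "\<omega> \<in> space M" "s \<le> s'"
  shows "0 \<le> Max ((\<lambda>m. norm (\<Theta> m \<omega>)) ` {NN s \<omega>..NN s' \<omega>})"
proof -
  have "NN s \<omega> \<in> {NN s \<omega>..NN s' \<omega>}" using NN_mono[OF assms] by simp
  from Max_ge[OF assms this] show ?thesis using norm_ge_zero[of "\<Theta> (NN s \<omega>) \<omega>"] by linarith
qed

definition Iw :: "real \<Rightarrow> nat \<Rightarrow> real" where
  "Iw \<delta> n = (\<integral>\<omega>. min 1 (Max ((\<lambda>m. norm (\<Theta> m \<omega>)) ` {NN (real n * \<delta>) \<omega> .. NN ((real n + 1) * \<delta>) \<omega>}) * indicator EE \<omega>) \<partial>M)"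

lemma window_key:
  assumes del: "\<delta> > 0" and eps: "\<epsilon> > 0"
  shows "\<exists>n0. \<forall>n\<ge>n0. Iw \<delta> n \<le> 5 * \<epsilon>"
proof -
  obtain R where R1: "R \<ge> 1" and PR: "measure M (EE - ER R) \<le> \<epsilon>" using EE_ER_small[OF eps] by blast
  obtain G where G0: "0 \<le> G" and Gb: "\<And>\<theta>. norm \<theta> ^ 2 < R \<Longrightarrow> norm (g \<theta>) \<le> G" using g_bound[of R] by blast
  define IS where "IS = (\<integral>\<omega>. Sr R \<omega> \<partial>M)"
  have IS0: "0 \<le> IS" unfolding IS_def by (intro integral_nonneg_AE) (simp add: Sr_nonneg)
  define K where "K = IS / \<epsilon> + 1"
  have K0: "0 < K" unfolding K_def using IS0 eps by (simp add: add_nonneg_pos)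
  have PK: "measure M {\<omega>\<in>space M. K \<le> Sr R \<omega>} \<le> \<epsilon>"
  proof -
    have "measure M {\<omega>\<in>space M. K \<le> Sr R \<omega>} \<le> IS / K" unfolding IS_def by (rule Markov_Sr[OF K0])
    also have "\<dots> \<le> \<epsilon>"
    proof -
      have "IS \<le> \<epsilon> * K" unfolding K_def using eps by (simp add: field_simps)
      thus ?thesis using K0 by (simp add: divide_le_eq mult.commute)
    qed
    finally show ?thesis .
  qed
  define \<rho> where "\<rho> = \<epsilon>^2 / 10"
  have rho0: "0 < \<rho>" unfolding \<rho>_def using eps by simp
  define q where "q = 2 * R / \<epsilon>^2"
  have q0: "0 < q" unfolding q_def using R1 eps by simp
  define T where "T = 1 + \<bar>ln q\<bar> / (2 * c)"
  have T1: "1 \<le> T" unfolding T_def using c_pos by simp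
  have expT: "R * exp (-2 * c * (T - 1)) \<le> \<epsilon>^2 / 2"
  proof -
    have "-2 * c * (T - 1) = - \<bar>ln q\<bar>" unfolding T_def using c_pos by (simp add: field_simps)
    also have "\<dots> \<le> - ln q" by simp
    finally have "exp (-2 * c * (T - 1)) \<le> exp (- ln q)" by simp
    also have "\<dots> = 1 / q" using q0 by (simp add: exp_minus inverse_eq_divide)
    finally have "R * exp (-2 * c * (T - 1)) \<le> R * (1 / q)" using R1 by (intro mult_left_mono) auto
    also have "\<dots> = \<epsilon>^2 / 2" unfolding q_def using R1 eps by (simp add: field_simps)
    finally show ?thesis .
  qed
  define A1 where "A1 = 2 * (G^2 + K) * (T + \<delta> + 1)"
  define A2 where "A2 = R * (T + \<delta> + 1) * IS"
  have A10: "0 \<le> A1" unfolding A1_def using K0 T1 del by simp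
  have A20: "0 \<le> A2" unfolding A2_def using R1 T1 del IS0 by simp
  define \<eta> where "\<eta> = min (min 1 (1 / (2 * c))) (min (\<rho> / (A1 + 1)) (\<epsilon> * \<rho>^2 / (A2 + 1)))"
  have eta0: "0 < \<eta>" unfolding \<eta>_def using c_pos rho0 A10 A20 eps by simp
  have eta1: "\<eta> \<le> 1" unfolding \<eta>_def by (rule min.coboundedI1, rule min.cobounded1)
  have eta2: "2 * c * \<eta> \<le> 1"
  proof -
    have "\<eta> \<le> 1 / (2 * c)" unfolding \<eta>_def by (rule min.coboundedI1, rule min.cobounded2)
    thus ?thesis using c_pos by (simp add: field_simps)
  qed
  have "\<eta> \<le> \<rho> / (A1 + 1)" unfolding \<eta>_def by (rule min.coboundedI2, rule min.cobounded1)
  hence es: "\<eta> * A1 \<le> \<rho>" by (intro eta_helper[OF A10] less_imp_le[OF eta0])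
  have "\<eta> \<le> \<epsilon> * \<rho>^2 / (A2 + 1)" unfolding \<eta>_def by (rule min.coboundedI2, rule min.cobounded2)
  hence ms: "\<eta> * A2 \<le> \<epsilon> * \<rho>^2" by (intro eta_helper[OF A20] less_imp_le[OF eta0])
  define Bg where "Bg n = {\<omega>\<in>space M. \<eta> < gam (NN (real n * \<delta> - T) \<omega>) \<omega>}" for n
  have Bg_sets: "Bg n \<in> sets M" for n
  proof -
    have [measurable]: "(\<lambda>\<omega>. gam (NN t \<omega>) \<omega>) \<in> borel_measurable M" for t
      by (rule measurable_compose_countable[OF gam_M NN_meas])
    show ?thesis unfolding Bg_def by measurable
  qed
  have "(\<lambda>n. measure M (Bg n)) \<longlonglongrightarrow> 0" unfolding Bg_def
    by (rule gamma_event_small[OF eta0 _ del]) (use T1 in simp)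
  then obtain n1 where n1: "\<And>n. n \<ge> n1 \<Longrightarrow> measure M (Bg n) < \<epsilon>"
    using eps by (auto simp: lim_sequentially dist_real_def)
  obtain n2 :: nat where n2: "(T + 1) / \<delta> < real n2" using reals_Archimedean2 by blast
  have n2': "T + 1 < real n2 * \<delta>" using n2 del by (simp add: field_simps)
  show ?thesis
  proof (intro exI[of _ "max n1 n2"] allI impI)
    fix n assume n: "max n1 n2 \<le> n"
    define a where "a = real n * \<delta> - T"
    define t0 where "t0 = real n * \<delta>"
    define b where "b = (real n + 1) * \<delta>"
    have "real n2 * \<delta> \<le> real n * \<delta>" using n del by (intro mult_right_mono) auto
    hence a1: "1 < a" unfolding a_def using n2' by linarith
    have at0: "a \<le> t0" unfolding a_def t0_def using T1 by simp
    have t0b: "t0 \<le> b" unfolding t0_def b_def using del by (simp add: algebra_simps)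
    have ba: "b - a = T + \<delta>" unfolding a_def b_def by (simp add: algebra_simps)
    define Mb where "Mb = Mbad R \<eta> a b \<rho>"
    have PM: "measure M Mb \<le> \<epsilon>"
    proof -
      have "\<rho>^2 * measure M Mb \<le> \<eta> * R * (b - a + \<eta>) * IS"
        unfolding Mb_def IS_def by (rule Mbad_bound) (use at0 t0b eta0 R1 rho0 in auto)
      also have "\<dots> \<le> \<eta> * A2"
      proof -
        have "b - a + \<eta> \<le> T + \<delta> + 1" using ba eta1 by simp
        hence "(\<eta> * R) * (b - a + \<eta>) * IS \<le> (\<eta> * R) * (T + \<delta> + 1) * IS"
          using eta0 R1 IS0 by (intro mult_right_mono mult_left_mono) auto
        thus ?thesis unfolding A2_def by (simp add: mult_ac)
      qed
      also have "\<dots> \<le> \<epsilon> * \<rho>^2" by (rule ms)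
      finally have "\<rho>^2 * measure M Mb \<le> \<rho>^2 * \<epsilon>" by (simp add: mult_ac)
      thus ?thesis using rho0 by simp
    qed
    define Bad where "Bad = (EE - ER R) \<union> {\<omega>\<in>space M. K \<le> Sr R \<omega>} \<union> {\<omega>\<in>space M. Shat R \<omega> = \<infinity>} \<union> Bg n \<union> Mb"
    have SrM[measurable]: "Sr R \<in> borel_measurable M" unfolding Sr_def by measurable
    have s1: "{\<omega>\<in>space M. K \<le> Sr R \<omega>} \<in> sets M" by measurable
    have s2: "{\<omega>\<in>space M. Shat R \<omega> = \<infinity>} \<in> sets M" by measurable
    have s3: "EE - ER R \<in> sets M" by measurable
    have s4: "Mb \<in> sets M" unfolding Mb_def by measurable
    have Bad_sets: "Bad \<in> sets M" unfolding Bad_def using s1 s2 s3 s4 Bg_sets by auto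
    have PBad: "measure M Bad \<le> 4 * \<epsilon>"
    proof -
      have "measure M Bad \<le> measure M ((EE - ER R) \<union> {\<omega>\<in>space M. K \<le> Sr R \<omega>} \<union> {\<omega>\<in>space M. Shat R \<omega> = \<infinity>} \<union> Bg n) + measure M Mb"
        unfolding Bad_def by (rule measure_Un_le) (use s1 s2 s3 s4 Bg_sets in auto)
      also have "measure M ((EE - ER R) \<union> {\<omega>\<in>space M. K \<le> Sr R \<omega>} \<union> {\<omega>\<in>space M. Shat R \<omega> = \<infinity>} \<union> Bg n)
          \<le> measure M ((EE - ER R) \<union> {\<omega>\<in>space M. K \<le> Sr R \<omega>} \<union> {\<omega>\<in>space M. Shat R \<omega> = \<infinity>}) + measure M (Bg n)"
        by (rule measure_Un_le) (use s1 s2 s3 s4 Bg_sets in auto)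
      also have "measure M ((EE - ER R) \<union> {\<omega>\<in>space M. K \<le> Sr R \<omega>} \<union> {\<omega>\<in>space M. Shat R \<omega> = \<infinity>})
          \<le> measure M ((EE - ER R) \<union> {\<omega>\<in>space M. K \<le> Sr R \<omega>}) + measure M {\<omega>\<in>space M. Shat R \<omega> = \<infinity>}"
        by (rule measure_Un_le) (use s1 s2 s3 in auto)
      also have "measure M ((EE - ER R) \<union> {\<omega>\<in>space M. K \<le> Sr R \<omega>}) \<le> measure M (EE - ER R) + measure M {\<omega>\<in>space M. K \<le> Sr R \<omega>}"
        by (rule measure_Un_le) (use s1 s3 in auto)
      moreover have "measure M (Bg n) \<le> \<epsilon>" using n1[of n] n by simp
      ultimately show ?thesis using PR PK PM Shat_inf_null[of R] by linarith
    qed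
    define f where "f \<omega> = min 1 (Max ((\<lambda>m. norm (\<Theta> m \<omega>)) ` {NN t0 \<omega> .. NN b \<omega>}) * indicator EE \<omega>)" for \<omega>
    have fM: "f \<in> borel_measurable M" unfolding f_def using Max_meas by measurable
    have fpt: "f \<omega> \<le> \<epsilon> + indicator Bad \<omega>" if w: "\<omega> \<in> space M" for \<omega>
    proof (cases "\<omega> \<in> Bad")
      case True
      have "f \<omega> \<le> 1" by (simp add: f_def)
      thus ?thesis using True eps by simp
    next
      case nb: False
      show ?thesis
      proof (cases "\<omega> \<in> EE")
        case False
        hence "f \<omega> = 0" by (simp add: f_def)
        thus ?thesis using eps by simp
      next
        case True
        have nb1: "\<omega> \<notin> EE - ER R" and nb2: "\<omega> \<notin> {\<omega>\<in>space M. K \<le> Sr R \<omega>}"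
          and nb3: "\<omega> \<notin> {\<omega>\<in>space M. Shat R \<omega> = \<infinity>}" and nb4: "\<omega> \<notin> Bg n" and nb5: "\<omega> \<notin> Mb"
          using nb unfolding Bad_def by blast+
        have wER: "\<omega> \<in> ER R" using nb1 True by blast
        have SK: "Sr R \<omega> < K" using nb2 w by (simp add: not_le)
        have Sfin: "Shat R \<omega> \<noteq> \<infinity>" using nb3 w by simp
        have gk': "gam (NN a \<omega>) \<omega> \<le> \<eta>" using nb4 w unfolding Bg_def a_def by (simp add: not_less)
        have gk: "\<gamma> (NN a \<omega>) \<omega> \<le> \<eta>" using gk' NN_pos[of a \<omega>] a1 w by (simp add: gam_def)
        have mart: "\<bar>\<Sum>i\<in>{1..j}. X R \<eta> a b i \<omega>\<bar> < \<rho>" for j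
          using nb5 w unfolding Mb_def Mbad_def by (simp add: not_le)
        have esmall: "2 * \<eta> * (G^2 + K) * (b - a + 1) \<le> \<rho>"
          using es unfolding A1_def ba by (simp add: mult_ac)
        have Mle: "norm (\<Theta> m \<omega>) \<le> \<epsilon>" if m: "m \<in> {NN t0 \<omega>..NN b \<omega>}" for m
        proof -
          have pw: "norm (\<Theta> m \<omega>) ^ 2 \<le> R * exp (-2 * c * (t0 - a - \<eta>)) + 5 * \<rho>"
            by (rule pathwise[OF w wER Gb G0 Sfin SK eta0 eta1 eta2 _ at0 t0b gk mart esmall])
              (use a1 m in auto)
          have ex: "R * exp (-2 * c * (t0 - a - \<eta>)) \<le> R * exp (-2 * c * (T - 1))"
          proof -
            have e1: "t0 - a - \<eta> = T - \<eta>" unfolding t0_def a_def by simp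
            have "2 * c * (T - 1) \<le> 2 * c * (T - \<eta>)" using c_pos eta1 by (intro mult_left_mono) auto
            hence "-2 * c * (t0 - a - \<eta>) \<le> -2 * c * (T - 1)" unfolding e1 by linarith
            hence e3: "exp (-2 * c * (t0 - a - \<eta>)) \<le> exp (-2 * c * (T - 1))" by (rule exp_mono)
            show ?thesis by (rule mult_left_mono[OF e3]) (use R1 in linarith)
          qed
          have n2: "norm (\<Theta> m \<omega>) ^ 2 \<le> R * exp (-2 * c * (T - 1)) + 5 * \<rho>" using pw ex by linarith
          have "5 * \<rho> = \<epsilon>^2 / 2" unfolding \<rho>_def by simp
          hence "norm (\<Theta> m \<omega>) ^ 2 \<le> \<epsilon> ^ 2" using n2 expT by linarith
          thus ?thesis by (rule power2_le_imp_le) (use eps in linarith)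
        qed
        have "Max ((\<lambda>m. norm (\<Theta> m \<omega>)) ` {NN t0 \<omega> .. NN b \<omega>}) \<le> \<epsilon>"
          using Mle NN_mono[OF w t0b] by (subst Max_le_iff) auto
        hence "f \<omega> \<le> \<epsilon>" using True by (simp add: f_def)
        thus ?thesis using nb by simp
      qed
    qed
    have fint: "integrable M f"
    proof (rule Bochner_Integration.integrable_bound[where f="\<lambda>_. 1::real"])
      show "integrable M (\<lambda>_. 1::real)" by simp
      show "f \<in> borel_measurable M" by (rule fM)
      show "AE \<omega> in M. norm (f \<omega>) \<le> norm (1::real)"
        using AE_space
      proof eventually_elim
        case (elim \<omega>)
        have "0 \<le> Max ((\<lambda>m. norm (\<Theta> m \<omega>)) ` {NN t0 \<omega> .. NN b \<omega>})" by (rule Max_nonneg[OF elim t0b])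
        thus ?case by (simp add: f_def)
      qed
    qed
    have "Iw \<delta> n = (\<integral>\<omega>. f \<omega> \<partial>M)" unfolding Iw_def f_def t0_def b_def ..
    also have "\<dots> \<le> (\<integral>\<omega>. \<epsilon> + indicator Bad \<omega> \<partial>M)"
    proof (rule Bochner_Integration.integral_mono[OF fint])
      show "integrable M (\<lambda>\<omega>. \<epsilon> + indicator Bad \<omega>)"
        using Bad_sets by (simp add: integrable_indicator_iff P.emeasure_finite less_top[symmetric])
    qed (rule fpt)
    also have "\<dots> = \<epsilon> + measure M Bad"
      using Bad_sets by (simp add: integrable_indicator_iff P.emeasure_finite less_top[symmetric] P.prob_space Int_absorb2 sets.sets_into_space)
    also have "\<dots> \<le> 5 * \<epsilon>" using PBad by simp
    finally show "Iw \<delta> n \<le> 5 * \<epsilon>" .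
  qed
qed

end

context sa
begin

lemma Iw_nonneg: "s \<le> s' \<Longrightarrow> 0 \<le> (\<integral>\<omega>. min 1 (Max ((\<lambda>m. norm (\<Theta> m \<omega>)) ` {NN s \<omega> .. NN s' \<omega>}) * indicator EE \<omega>) \<partial>M)"
proof (intro integral_nonneg_AE AE_I2 impI)
  fix \<omega> assume "s \<le> s'" "\<omega> \<in> space M"
  hence "0 \<le> Max ((\<lambda>m. norm (\<Theta> m \<omega>)) ` {NN s \<omega> .. NN s' \<omega>})" by (intro Max_nonneg)
  thus "0 \<le> min 1 (Max ((\<lambda>m. norm (\<Theta> m \<omega>)) ` {NN s \<omega> .. NN s' \<omega>}) * indicator EE \<omega>)" by simp
qed

lemma Iw_int: assumes "s \<le> s'"
  shows "integrable M (\<lambda>\<omega>. min 1 (Max ((\<lambda>m. norm (\<Theta> m \<omega>)) ` {NN s \<omega> .. NN s' \<omega>}) * indicator EE \<omega>))"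
proof (rule Bochner_Integration.integrable_bound[where f="\<lambda>_. 1::real"])
  show "integrable M (\<lambda>_. 1::real)" by simp
  show "(\<lambda>\<omega>. min 1 (Max ((\<lambda>m. norm (\<Theta> m \<omega>)) ` {NN s \<omega> .. NN s' \<omega>}) * indicator EE \<omega>)) \<in> borel_measurable M"
    using Max_meas by measurable
  show "AE \<omega> in M. norm (min 1 (Max ((\<lambda>m. norm (\<Theta> m \<omega>)) ` {NN s \<omega> .. NN s' \<omega>}) * indicator EE \<omega>)) \<le> norm (1::real)"
    using AE_space
  proof eventually_elim
    case (elim \<omega>)
    have "0 \<le> Max ((\<lambda>m. norm (\<Theta> m \<omega>)) ` {NN s \<omega> .. NN s' \<omega>})" by (rule Max_nonneg[OF elim assms])
    thus ?case by simp
  qed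
qed

lemma Th_NN_meas: "(\<lambda>\<omega>. \<Theta> (NN t \<omega>) \<omega>) \<in> borel_measurable M"
  by (rule measurable_compose_countable[OF Theta_M NN_meas])

lemma J_int: "integrable M (\<lambda>\<omega>. min 1 (norm (\<Theta> (NN t \<omega>) \<omega>) * indicator EE \<omega>))"
proof (rule Bochner_Integration.integrable_bound[where f="\<lambda>_. 1::real"])
  show "integrable M (\<lambda>_. 1::real)" by simp
  show "(\<lambda>\<omega>. min 1 (norm (\<Theta> (NN t \<omega>) \<omega>) * indicator EE \<omega>)) \<in> borel_measurable M"
    using Th_NN_meas by measurable
  show "AE \<omega> in M. norm (min 1 (norm (\<Theta> (NN t \<omega>) \<omega>) * indicator EE \<omega>)) \<le> norm (1::real)"
    by (rule AE_I2) simp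
qed

lemma J_le: assumes "s \<le> t" "t \<le> s'"
  shows "(\<integral>\<omega>. min 1 (norm (\<Theta> (NN t \<omega>) \<omega>) * indicator EE \<omega>) \<partial>M)
     \<le> (\<integral>\<omega>. min 1 (Max ((\<lambda>m. norm (\<Theta> m \<omega>)) ` {NN s \<omega> .. NN s' \<omega>}) * indicator EE \<omega>) \<partial>M)"
proof (rule Bochner_Integration.integral_mono[OF J_int Iw_int])
  show "s \<le> s'" using assms by linarith
  fix \<omega> assume w: "\<omega> \<in> space M"
  have "norm (\<Theta> (NN t \<omega>) \<omega>) \<le> Max ((\<lambda>m. norm (\<Theta> m \<omega>)) ` {NN s \<omega> .. NN s' \<omega>})"
    by (rule Max_ge) (use w assms NN_mono[OF w] in auto)
  thus "min 1 (norm (\<Theta> (NN t \<omega>) \<omega>) * indicator EE \<omega>) \<le> min 1 (Max ((\<lambda>m. norm (\<Theta> m \<omega>)) ` {NN s \<omega> .. NN s' \<omega>}) * indicator EE \<omega>)"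
    by (auto simp: indicator_def)
qed

lemma J_nonneg: "0 \<le> (\<integral>\<omega>. min 1 (norm (\<Theta> (NN t \<omega>) \<omega>) * indicator EE \<omega>) \<partial>M)"
  by (intro integral_nonneg_AE AE_I2) auto

lemma window: assumes del: "\<delta> > 0" shows "Iw \<delta> \<longlonglongrightarrow> 0"
proof (rule LIMSEQ_I)
  fix r :: real assume r: "0 < r"
  obtain n0 where n0: "\<And>n. n \<ge> n0 \<Longrightarrow> Iw \<delta> n \<le> 5 * (r / 6)" using window_key[OF del, of "r/6"] r by auto
  have "norm (Iw \<delta> n - 0) < r" if "n \<ge> n0" for n
  proof -
    have "0 \<le> Iw \<delta> n" unfolding Iw_def by (rule Iw_nonneg) (use del in \<open>simp add: algebra_simps\<close>)
    thus ?thesis using n0[OF that] r by simp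
  qed
  thus "\<exists>no. \<forall>n\<ge>no. norm (Iw \<delta> n - 0) < r" by blast
qed

lemma part_i: assumes del: "\<delta> > 0"
  shows "(\<lambda>n. (\<integral>\<omega>. min 1 (norm (\<Theta> (NN (real n * \<delta>) \<omega>) \<omega>) * indicator EE \<omega>) \<partial>M)) \<longlonglongrightarrow> 0"
proof (rule tendsto_sandwich[OF _ _ tendsto_const window[OF del]])
  show "\<forall>\<^sub>F n in sequentially. 0 \<le> (\<integral>\<omega>. min 1 (norm (\<Theta> (NN (real n * \<delta>) \<omega>) \<omega>) * indicator EE \<omega>) \<partial>M)"
    by (intro always_eventually allI J_nonneg)
  show "\<forall>\<^sub>F n in sequentially. (\<integral>\<omega>. min 1 (norm (\<Theta> (NN (real n * \<delta>) \<omega>) \<omega>) * indicator EE \<omega>) \<partial>M) \<le> Iw \<delta> n"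
    unfolding Iw_def by (intro always_eventually allI J_le) (use del in \<open>simp_all add: algebra_simps\<close>)
qed

lemma part_iii:
  "((\<lambda>t. (\<integral>\<omega>. min 1 (norm (\<Theta> (NN t \<omega>) \<omega>) * indicator EE \<omega>) \<partial>M)) \<longlongrightarrow> 0) at_top"
proof -
  have fl: "filterlim (\<lambda>t::real. nat \<lfloor>t\<rfloor>) sequentially at_top"
    unfolding filterlim_at_top
  proof
    fix Z :: nat
    show "\<forall>\<^sub>F t in at_top. Z \<le> nat \<lfloor>t::real\<rfloor>"
      using eventually_ge_at_top[of "real Z"] by eventually_elim (rule le_nat_floor)
  qed
  have up: "((\<lambda>t::real. Iw 1 (nat \<lfloor>t\<rfloor>)) \<longlongrightarrow> 0) at_top"
    by (rule filterlim_compose[OF window fl]) simp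
  show ?thesis
  proof (rule tendsto_sandwich[OF _ _ tendsto_const up])
    show "\<forall>\<^sub>F t in at_top. 0 \<le> (\<integral>\<omega>. min 1 (norm (\<Theta> (NN t \<omega>) \<omega>) * indicator EE \<omega>) \<partial>M)"
      by (intro always_eventually allI J_nonneg)
    show "\<forall>\<^sub>F t in at_top. (\<integral>\<omega>. min 1 (norm (\<Theta> (NN t \<omega>) \<omega>) * indicator EE \<omega>) \<partial>M) \<le> Iw 1 (nat \<lfloor>t\<rfloor>)"
      unfolding eventually_at_top_linorder Iw_def
    proof (intro exI[of _ 0] allI impI)
      fix t :: real assume t: "0 \<le> t"
      have a: "real (nat \<lfloor>t\<rfloor>) * 1 \<le> t" using t by simp
      have "t \<le> real_of_int \<lfloor>t\<rfloor> + 1" by linarith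
      moreover have "real (nat \<lfloor>t\<rfloor>) = real_of_int \<lfloor>t\<rfloor>" using t by simp
      ultimately have b: "t \<le> (real (nat \<lfloor>t\<rfloor>) + 1) * 1" by simp
      show "(\<integral>\<omega>. min 1 (norm (\<Theta> (NN t \<omega>) \<omega>) * indicator EE \<omega>) \<partial>M)
        \<le> (\<integral>\<omega>. min 1 (Max ((\<lambda>m. norm (\<Theta> m \<omega>)) ` {NN (real (nat \<lfloor>t\<rfloor>) * 1) \<omega> .. NN ((real (nat \<lfloor>t\<rfloor>) + 1) * 1) \<omega>}) * indicator EE \<omega>) \<partial>M)"
        by (rule J_le[OF a b])
    qed
  qed
qed

end

theorem proposition4p6:
  fixes M :: "'a measure"
    and F :: "nat \<Rightarrow> 'a measure"
    and \<gamma> :: "nat \<Rightarrow> 'a \<Rightarrow> real"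
    and g :: "real^'d \<Rightarrow> real^'d"
    and c :: real
    and D :: "nat \<Rightarrow> 'a \<Rightarrow> real^'d"
    and \<Theta> :: "nat \<Rightarrow> 'a \<Rightarrow> real^'d"
  assumes prob: "prob_space M"
    and filt_sub: "\<And>n. subalgebra M (F n)"
    and filt_mono: "\<And>n m. n \<le> m \<Longrightarrow> sets (F n) \<subseteq> sets (F m)"
    and gamma_meas: "\<And>n. n \<ge> 1 \<Longrightarrow> \<gamma> n \<in> borel_measurable (F (n - 1))"
    and gamma_nonneg: "\<And>n \<omega>. n \<ge> 1 \<Longrightarrow> \<omega> \<in> space M \<Longrightarrow> \<gamma> n \<omega> \<ge> 0"
    and gamma_limsup: "\<And>\<omega>. \<omega> \<in> space M \<Longrightarrow> limsup (\<lambda>n. ereal (\<gamma> n \<omega>)) = 0"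
    and gamma_sum: "\<And>\<omega>. \<omega> \<in> space M \<Longrightarrow> (\<Sum>n. ennreal (\<gamma> (Suc n) \<omega>)) = \<infinity>"
    and gamma_mono: "\<And>n \<omega>. n \<ge> 1 \<Longrightarrow> \<omega> \<in> space M \<Longrightarrow> \<gamma> (Suc n) \<omega> \<le> \<gamma> n \<omega>"
    and g_meas: "g \<in> borel_measurable borel"
    and g_locbdd: "locally_bounded g"
    and c_pos: "c > 0"
    and g_coercive: "\<And>\<theta>. inner \<theta> (g \<theta>) \<le> - c * norm \<theta> ^ 2"
    and D_int: "\<And>n. n \<ge> 1 \<Longrightarrow> integrable M (D n)"
    and D_mart: "\<And>n i. n \<ge> 1 \<Longrightarrow>
        AE \<omega> in M. real_cond_exp M (F (n - 1)) (\<lambda>x. D n x $ i) \<omega> = 0"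
    and Theta_adapted: "\<And>n. \<Theta> n \<in> borel_measurable (F n)"
    and Theta_rec: "\<And>n \<omega>. n \<ge> 1 \<Longrightarrow> \<omega> \<in> space M \<Longrightarrow>
        \<Theta> n \<omega> = \<Theta> (n - 1) \<omega> + \<gamma> n \<omega> *\<^sub>R g (\<Theta> (n - 1) \<omega>) + \<gamma> n \<omega> *\<^sub>R D n \<omega>"
    and D_sup_int: "\<And>R. (\<integral>\<^sup>+ \<omega>. (SUP n\<in>{n. n \<ge> 1 \<and> enat n \<le> entrance_time \<Theta> R \<omega>}.
        ennreal (norm (D n \<omega>) ^ 2)) \<partial>M) < \<infinity>"
  defines "N \<equiv> time_index \<gamma>"
    and "E \<equiv> {\<omega> \<in> space M. bdd_above ((\<lambda>n. norm (\<Theta> n \<omega>)) ` {1..})}"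
  shows "(\<forall>\<delta>>0. limsup (\<lambda>n. ereal (\<integral>\<omega>. min 1 (norm (\<Theta> (N (real n * \<delta>) \<omega>) \<omega>) * indicator E \<omega>) \<partial>M)) = 0)
    \<and> (\<forall>\<delta>>0. limsup (\<lambda>n. ereal (\<integral>\<omega>. min 1
            (Max ((\<lambda>m. norm (\<Theta> m \<omega>)) ` {N (real n * \<delta>) \<omega> .. N ((real n + 1) * \<delta>) \<omega>})
             * indicator E \<omega>) \<partial>M)) = 0)
    \<and> Limsup at_top (\<lambda>t::real. ereal (\<integral>\<omega>. min 1 (norm (\<Theta> (N t \<omega>) \<omega>) * indicator E \<omega>) \<partial>M)) = 0"
proof -
  interpret sa M F \<gamma> g c D \<Theta>
    by (rule sa.intro[OF prob filt_sub filt_mono gamma_meas gamma_nonneg gamma_limsup gamma_sum gamma_mono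
          g_meas g_locbdd c_pos g_coercive D_int D_mart Theta_adapted Theta_rec D_sup_int])
  have EE: "E = EE" unfolding E_def EE_def ..
  have NE: "N = time_index \<gamma>" unfolding N_def ..
  have i: "\<forall>\<delta>>0. limsup (\<lambda>n. ereal (\<integral>\<omega>. min 1 (norm (\<Theta> (N (real n * \<delta>) \<omega>) \<omega>) * indicator E \<omega>) \<partial>M)) = 0"
  proof (intro allI impI)
    fix \<delta> :: real assume d: "\<delta> > 0"
    have "(\<lambda>n. ereal (\<integral>\<omega>. min 1 (norm (\<Theta> (N (real n * \<delta>) \<omega>) \<omega>) * indicator E \<omega>) \<partial>M)) \<longlonglongrightarrow> ereal 0"
      unfolding lim_ereal EE NE by (rule part_i[OF d])
    hence "limsup (\<lambda>n. ereal (\<integral>\<omega>. min 1 (norm (\<Theta> (N (real n * \<delta>) \<omega>) \<omega>) * indicator E \<omega>) \<partial>M)) = ereal 0"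
      by (intro lim_imp_Limsup) simp_all
    thus "limsup (\<lambda>n. ereal (\<integral>\<omega>. min 1 (norm (\<Theta> (N (real n * \<delta>) \<omega>) \<omega>) * indicator E \<omega>) \<partial>M)) = 0"
      by (simp add: zero_ereal_def)
  qed
  have ii: "\<forall>\<delta>>0. limsup (\<lambda>n. ereal (\<integral>\<omega>. min 1
            (Max ((\<lambda>m. norm (\<Theta> m \<omega>)) ` {N (real n * \<delta>) \<omega> .. N ((real n + 1) * \<delta>) \<omega>})
             * indicator E \<omega>) \<partial>M)) = 0"
  proof (intro allI impI)
    fix \<delta> :: real assume d: "\<delta> > 0"
    have "(\<lambda>n. ereal (\<integral>\<omega>. min 1
            (Max ((\<lambda>m. norm (\<Theta> m \<omega>)) ` {N (real n * \<delta>) \<omega> .. N ((real n + 1) * \<delta>) \<omega>})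
             * indicator E \<omega>) \<partial>M)) \<longlonglongrightarrow> ereal 0"
      unfolding lim_ereal EE NE using window[OF d] unfolding Iw_def .
    hence "limsup (\<lambda>n. ereal (\<integral>\<omega>. min 1
            (Max ((\<lambda>m. norm (\<Theta> m \<omega>)) ` {N (real n * \<delta>) \<omega> .. N ((real n + 1) * \<delta>) \<omega>})
             * indicator E \<omega>) \<partial>M)) = ereal 0"
      by (intro lim_imp_Limsup) simp_all
    thus "limsup (\<lambda>n. ereal (\<integral>\<omega>. min 1
            (Max ((\<lambda>m. norm (\<Theta> m \<omega>)) ` {N (real n * \<delta>) \<omega> .. N ((real n + 1) * \<delta>) \<omega>})
             * indicator E \<omega>) \<partial>M)) = 0"
      by (simp add: zero_ereal_def)
  qed
  have iii: "Limsup at_top (\<lambda>t::real. ereal (\<integral>\<omega>. min 1 (norm (\<Theta> (N t \<omega>) \<omega>) * indicator E \<omega>) \<partial>M)) = 0"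
  proof -
    have "((\<lambda>t::real. ereal (\<integral>\<omega>. min 1 (norm (\<Theta> (N t \<omega>) \<omega>) * indicator E \<omega>) \<partial>M)) \<longlongrightarrow> ereal 0) at_top"
      unfolding lim_ereal EE NE by (rule part_iii)
    hence "Limsup at_top (\<lambda>t::real. ereal (\<integral>\<omega>. min 1 (norm (\<Theta> (N t \<omega>) \<omega>) * indicator E \<omega>) \<partial>M)) = ereal 0"
      by (intro lim_imp_Limsup) simp_all
    thus ?thesis by (simp add: zero_ereal_def)
  qed
  show ?thesis using i ii iii by blast
qed

end
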